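(* Let $N$ be a binary tree-based network, and let $O$ and $R$ be the sets of omnians and reticulations of $N$. Then $$|Sup(N)|=2^c\cdot\prod_{P\in\pi(\mathcal{B}_N)}\tfrac12\bigl(v(P)+3\bigr),$$ where $c$ is the number of connected components of $\mathcal{B}_N$ that are cycles, $\pi(\mathcal{B}_N)$ is the set of connected components of $\mathcal{B}_N$ that are paths both of whose end vertices lie in $R$, and $v(P)$ is the number of vertices of $P$.
   Context: A phylogenetic network on a nonempty finite set $X$ is a rooted acyclic digraph with no parallel arcs such that: the unique root has out-degree at least one; $X$ is exactly the set of vertices of out-degree zero (leaves), each of in-degree one; every other vertex either has in-degree one and out-degree at least two (a tree vertex) or in-degree at least two and out-degree one (a reticulation). It is binary if every tree vertex has out-degree two and every reticulation has in-degree two. An omnian is a non-leaf vertex all of whose children are reticulations (an omnian may be a reticulation). $N$ is tree-based if it has a spanning tree rooted at the root of $N$ all of whose leaves lie in $X$; a support tree for $N$ is such a spanning tree, i.e., a subgraph of $N$ containing all vertices of $N$ that is a directed tree rooted at the root of $N$ whose leaf set is exactly $X$. $Sup(N)$ denotes the set of support trees for $N$ (distinguished by their arc sets). $\mathcal{B}_N$ is the bipartite graph with vertex bipartition $\{O,R\}$ (as disjoint copies) and an edge $\{o,r\}$ for each arc $(o,r)$ of $N$ with $o\in O$, $r\in R$. *)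

theory Defs
  imports Complex_Main
begin

text \<open>A directed graph is given by a finite vertex set V and an arc set A (a set of
  ordered pairs, so no parallel arcs). N = (V, A, rho, X).\<close>

definition indeg :: "('a \<times> 'a) set \<Rightarrow> 'a \<Rightarrow> nat" where
  "indeg A v = card {u. (u, v) \<in> A}"

definition outdeg :: "('a \<times> 'a) set \<Rightarrow> 'a \<Rightarrow> nat" where
  "outdeg A v = card {w. (v, w) \<in> A}"

definition phylo_network :: "'a set \<Rightarrow> ('a \<times> 'a) set \<Rightarrow> 'a \<Rightarrow> 'a set \<Rightarrow> bool" where
  "phylo_network V A rho X \<longleftrightarrow>
     finite V \<and> A \<subseteq> V \<times> V \<and> acyclic A \<and> X \<noteq> {} \<and>
     rho \<in> V \<and> indeg A rho = 0 \<and> (\<forall>v\<in>V. v \<noteq> rho \<longrightarrow> (rho, v) \<in> A\<^sup>+) \<and>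
     outdeg A rho \<ge> 1 \<and>
     X = {v \<in> V. outdeg A v = 0} \<and>
     (\<forall>x\<in>X. indeg A x = 1) \<and>
     (\<forall>v \<in> V - X - {rho}. (indeg A v = 1 \<and> outdeg A v \<ge> 2) \<or> (indeg A v \<ge> 2 \<and> outdeg A v = 1))"

definition tree_vertices :: "'a set \<Rightarrow> ('a \<times> 'a) set \<Rightarrow> 'a \<Rightarrow> 'a set \<Rightarrow> 'a set" where
  "tree_vertices V A rho X = {v \<in> V - X - {rho}. indeg A v = 1 \<and> outdeg A v \<ge> 2}"

definition reticulations :: "'a set \<Rightarrow> ('a \<times> 'a) set \<Rightarrow> 'a \<Rightarrow> 'a set \<Rightarrow> 'a set" where
  "reticulations V A rho X = {v \<in> V - X - {rho}. indeg A v \<ge> 2 \<and> outdeg A v = 1}"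

definition binary_network :: "'a set \<Rightarrow> ('a \<times> 'a) set \<Rightarrow> 'a \<Rightarrow> 'a set \<Rightarrow> bool" where
  "binary_network V A rho X \<longleftrightarrow> phylo_network V A rho X \<and>
     (\<forall>v \<in> tree_vertices V A rho X. outdeg A v = 2) \<and>
     (\<forall>v \<in> reticulations V A rho X. indeg A v = 2)"

definition omnians :: "'a set \<Rightarrow> ('a \<times> 'a) set \<Rightarrow> 'a \<Rightarrow> 'a set \<Rightarrow> 'a set" where
  "omnians V A rho X = {v \<in> V - X. \<forall>w. (v, w) \<in> A \<longrightarrow> w \<in> reticulations V A rho X}"

definition support_tree :: "'a set \<Rightarrow> ('a \<times> 'a) set \<Rightarrow> 'a \<Rightarrow> 'a set \<Rightarrow> ('a \<times> 'a) set \<Rightarrow> bool" where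
  "support_tree V A rho X T \<longleftrightarrow> T \<subseteq> A \<and>
     indeg T rho = 0 \<and>
     (\<forall>v\<in>V. v \<noteq> rho \<longrightarrow> indeg T v = 1 \<and> (rho, v) \<in> T\<^sup>+) \<and>
     {v \<in> V. outdeg T v = 0} = X"

definition Sup :: "'a set \<Rightarrow> ('a \<times> 'a) set \<Rightarrow> 'a \<Rightarrow> 'a set \<Rightarrow> ('a \<times> 'a) set set" where
  "Sup V A rho X = {T. support_tree V A rho X T}"

definition tree_based :: "'a set \<Rightarrow> ('a \<times> 'a) set \<Rightarrow> 'a \<Rightarrow> 'a set \<Rightarrow> bool" where
  "tree_based V A rho X \<longleftrightarrow> phylo_network V A rho X \<and> Sup V A rho X \<noteq> {}"

text \<open>The bipartite graph B_N: vertices Inl o (o an omnian) and Inr r (r a reticulation),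
  undirected edges {Inl o, Inr r} for arcs (o, r) of N.\<close>
definition BN_vertices :: "'a set \<Rightarrow> ('a \<times> 'a) set \<Rightarrow> 'a \<Rightarrow> 'a set \<Rightarrow> ('a + 'a) set" where
  "BN_vertices V A rho X = Inl ` omnians V A rho X \<union> Inr ` reticulations V A rho X"

definition BN_edges :: "'a set \<Rightarrow> ('a \<times> 'a) set \<Rightarrow> 'a \<Rightarrow> 'a set \<Rightarrow> ('a + 'a) set set" where
  "BN_edges V A rho X = {{Inl o', Inr r} | o' r. (o', r) \<in> A \<and>
      o' \<in> omnians V A rho X \<and> r \<in> reticulations V A rho X}"

definition BN_adj :: "'a set \<Rightarrow> ('a \<times> 'a) set \<Rightarrow> 'a \<Rightarrow> 'a set \<Rightarrow> ('a + 'a) rel" where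
  "BN_adj V A rho X = {(x, y). {x, y} \<in> BN_edges V A rho X}"

definition BN_components :: "'a set \<Rightarrow> ('a \<times> 'a) set \<Rightarrow> 'a \<Rightarrow> 'a set \<Rightarrow> ('a + 'a) set set" where
  "BN_components V A rho X = BN_vertices V A rho X //
     ((BN_adj V A rho X)\<^sup>* \<inter> (BN_vertices V A rho X \<times> BN_vertices V A rho X))"

text \<open>The component with vertex set C (the subgraph induced on C) is a path with vertex
  sequence ps (possibly a single vertex), resp. a cycle with cyclic vertex sequence ps.\<close>
definition is_path_seq :: "'b set set \<Rightarrow> 'b set \<Rightarrow> 'b list \<Rightarrow> bool" where
  "is_path_seq E C ps \<longleftrightarrow> ps \<noteq> [] \<and> distinct ps \<and> set ps = C \<and>
     (\<forall>x\<in>C. \<forall>y\<in>C. {x, y} \<in> E \<longleftrightarrow>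
        (\<exists>i. Suc i < length ps \<and> {x, y} = {ps ! i, ps ! Suc i}))"

definition is_cycle_seq :: "'b set set \<Rightarrow> 'b set \<Rightarrow> 'b list \<Rightarrow> bool" where
  "is_cycle_seq E C ps \<longleftrightarrow> length ps \<ge> 3 \<and> distinct ps \<and> set ps = C \<and>
     (\<forall>x\<in>C. \<forall>y\<in>C. {x, y} \<in> E \<longleftrightarrow>
        (\<exists>i < length ps. {x, y} = {ps ! i, ps ! ((Suc i) mod length ps)}))"

definition BN_cycle_components :: "'a set \<Rightarrow> ('a \<times> 'a) set \<Rightarrow> 'a \<Rightarrow> 'a set \<Rightarrow> ('a + 'a) set set" where
  "BN_cycle_components V A rho X = {C \<in> BN_components V A rho X.
      \<exists>ps. is_cycle_seq (BN_edges V A rho X) C ps}"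

definition BN_RR_paths :: "'a set \<Rightarrow> ('a \<times> 'a) set \<Rightarrow> 'a \<Rightarrow> 'a set \<Rightarrow> ('a + 'a) set set" where
  "BN_RR_paths V A rho X = {C \<in> BN_components V A rho X.
      \<exists>ps. is_path_seq (BN_edges V A rho X) C ps \<and>
           hd ps \<in> Inr ` reticulations V A rho X \<and> last ps \<in> Inr ` reticulations V A rho X}"

end

theory Submission
  imports Defs "HOL-Library.FuncSet"
begin


lemma path_max_exists:
  fixes E :: "'b set set"
  assumes fin: "finite C" and x0: "x0 \<in> C"
  defines "P \<equiv> {ps. ps \<noteq> [] \<and> distinct ps \<and> set ps \<subseteq> C \<and> (\<forall>i. Suc i < length ps \<longrightarrow> {ps!i, ps!Suc i} \<in> E)}"
  shows "\<exists>ps\<in>P. \<forall>q\<in>P. length q \<le> length ps"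
proof -
  have "P \<subseteq> {xs. set xs \<subseteq> C \<and> length xs \<le> card C}"
    unfolding P_def using distinct_card card_mono[OF fin] by (smt (verit) mem_Collect_eq subsetI)
  hence finP: "finite P" using finite_lists_length_le[OF fin] finite_subset by blast
  have "[x0] \<in> P" using x0 unfolding P_def by auto
  hence ne: "P \<noteq> {}" by auto
  define L where "L = Max (length ` P)"
  have "L \<in> length ` P" unfolding L_def using finP ne by (intro Max_in) auto
  then obtain ps where "ps \<in> P" "length ps = L" by auto
  moreover have "\<forall>q\<in>P. length q \<le> L" unfolding L_def using finP by auto
  ultimately show ?thesis by auto
qed

lemma three_nbrs:
  assumes deg: "finite {y. {x,y}\<in>E} \<and> card {y. {x,y}\<in>E} \<le> 2"
    and "{x,a}\<in>E" "{x,b}\<in>E" "{x,z}\<in>E" "a \<noteq> b"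
  shows "z = a \<or> z = b"
proof (rule ccontr)
  assume "\<not> ?thesis"
  hence "card {a,b,z} = 3" using assms(5) by auto
  moreover have "{a,b,z} \<subseteq> {y. {x,y}\<in>E}" using assms by auto
  ultimately have "card {a,b,z} \<le> card {y. {x,y}\<in>E}" using deg by (intro card_mono) auto
  thus False using deg \<open>card {a,b,z} = 3\<close> by linarith
qed

lemma comp_struct:
  fixes E :: "'b set set"
  assumes fin: "finite C" and x0: "x0 \<in> C"
    and closed: "\<And>x y. x \<in> C \<Longrightarrow> {x,y} \<in> E \<Longrightarrow> y \<in> C"
    and conn: "\<And>y. y \<in> C \<Longrightarrow> (x0,y) \<in> {(x,y). {x,y}\<in>E}\<^sup>*"
    and deg: "\<And>x. finite {y. {x,y}\<in>E} \<and> card {y. {x,y}\<in>E} \<le> 2"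
    and noloop: "\<And>x. {x} \<notin> E"
  shows "\<exists>ps. is_path_seq E C ps \<or> is_cycle_seq E C ps"
proof -
  define P where "P \<equiv> {ps. ps \<noteq> [] \<and> distinct ps \<and> set ps \<subseteq> C \<and> (\<forall>i. Suc i < length ps \<longrightarrow> {ps!i, ps!Suc i} \<in> E)}"
  obtain ps where psP: "ps \<in> P" and maxl: "\<And>q. q \<in> P \<Longrightarrow> length q \<le> length ps"
    using path_max_exists[OF fin x0, of E] unfolding P_def by blast
  define n where "n = length ps"
  have ne: "ps \<noteq> []" and dist: "distinct ps" and sub: "set ps \<subseteq> C"
    and adj: "\<And>i. Suc i < n \<Longrightarrow> {ps!i, ps!Suc i} \<in> E" using psP unfolding P_def n_def by auto
  have npos: "0 < n" using ne n_def by auto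
  have nth_in: "\<And>i. i < n \<Longrightarrow> ps!i \<in> C" using sub n_def by auto
  have dnth: "\<And>i j. i < n \<Longrightarrow> j < n \<Longrightarrow> ps!i = ps!j \<longleftrightarrow> i = j"
    using dist n_def nth_eq_iff_index_eq by blast
  have M1: "z \<in> set ps" if "{ps!0, z} \<in> E" for z
  proof (rule ccontr)
    assume zn: "z \<notin> set ps"
    have "z \<in> C" using closed[OF nth_in[OF npos] that] .
    have "z # ps \<in> P" unfolding P_def
    proof (intro CollectI conjI allI impI)
      show "distinct (z # ps)" using zn dist by auto
      show "set (z # ps) \<subseteq> C" using sub \<open>z \<in> C\<close> by auto
      fix i assume "Suc i < length (z # ps)"
      show "{(z # ps) ! i, (z # ps) ! Suc i} \<in> E"
      proof (cases i)
        case 0 thus ?thesis using that by (simp add: insert_commute)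
      next
        case (Suc j) thus ?thesis using adj \<open>Suc i < length (z # ps)\<close> n_def by auto
      qed
    qed simp
    thus False using maxl[of "z # ps"] by simp
  qed
  have M2: "z \<in> set ps" if "{ps!(n-1), z} \<in> E" for z
  proof (rule ccontr)
    assume zn: "z \<notin> set ps"
    have "z \<in> C" using closed[OF nth_in that] npos by auto
    have "ps @ [z] \<in> P" unfolding P_def
    proof (intro CollectI conjI allI impI)
      show "distinct (ps @ [z])" using zn dist by auto
      show "set (ps @ [z]) \<subseteq> C" using sub \<open>z \<in> C\<close> by auto
      fix i assume i: "Suc i < length (ps @ [z])"
      show "{(ps @ [z]) ! i, (ps @ [z]) ! Suc i} \<in> E"
      proof (cases "Suc i < n")
        case True thus ?thesis using adj n_def by (simp add: nth_append)
      next
        case False hence ii: "i = n - 1" "Suc i = n" using i n_def by auto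
        thus ?thesis using that n_def by (simp add: nth_append)
      qed
    qed simp
    thus False using maxl[of "ps @ [z]"] n_def by simp
  qed
  have M3: "z = ps!(i-1) \<or> z = ps!(i+1)" if "0 < i" "i + 1 < n" "{ps!i, z} \<in> E" for i z
  proof -
    have "{ps!i, ps!(i-1)} \<in> E" using adj[of "i-1"] that by (simp add: insert_commute)
    moreover have "{ps!i, ps!(i+1)} \<in> E" using adj[of i] that by simp
    moreover have "ps!(i-1) \<noteq> ps!(i+1)" using dnth that by simp
    ultimately show ?thesis using three_nbrs[OF deg] that(3) by blast
  qed
  have closure: "z \<in> set ps" if xin: "x \<in> set ps" and ee: "{x, z} \<in> E" for x z
  proof -
    obtain i where i: "i < n" "x = ps!i" using xin n_def by (auto simp: in_set_conv_nth)
    show ?thesis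
    proof (cases "i = 0")
      case True thus ?thesis using M1 i ee by auto
    next
      case False
      show ?thesis
      proof (cases "i = n - 1")
        case True thus ?thesis using M2 i ee by auto
      next
        case False2: False
        hence "z = ps!(i-1) \<or> z = ps!(i+1)" using M3[of i z] False i ee by auto
        thus ?thesis using i False2 n_def by auto
      qed
    qed
  qed
  have symA: "sym {(x,y). {x,y}\<in>E}" by (auto simp: sym_def insert_commute)
  have "C \<subseteq> set ps"
  proof
    fix y assume y: "y \<in> C"
    have h0: "ps!0 \<in> C" using nth_in npos by auto
    have "(ps!0, x0) \<in> {(x,y). {x,y}\<in>E}\<^sup>*"
      using conn[OF h0] sym_rtrancl[OF symA] unfolding sym_def by blast
    hence r: "(ps!0, y) \<in> {(x,y). {x,y}\<in>E}\<^sup>*" using conn[OF y] by (meson rtrancl_trans)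
    have "ps!0 \<in> set ps" using ne by simp
    from r this show "y \<in> set ps"
      by (induction rule: rtrancl_induct) (auto intro: closure)
  qed
  hence setC: "set ps = C" using sub by auto
  have EC: "b = Suc a \<or> (a = 0 \<and> b = n - 1)" if ab: "a < b" "b < n" "{ps!a, ps!b} \<in> E" for a b
  proof (rule ccontr)
    assume nt: "\<not> ?thesis"
    have a0: "a = 0"
    proof (rule ccontr)
      assume "a \<noteq> 0"
      hence "ps!b = ps!(a-1) \<or> ps!b = ps!(a+1)" using M3[of a "ps!b"] ab by auto
      thus False using dnth[of b "a-1"] dnth[of b "a+1"] ab nt by auto
    qed
    have "b \<noteq> n - 1" using nt a0 by auto
    hence "ps!0 = ps!(b-1) \<or> ps!0 = ps!(b+1)" using M3[of b "ps!0"] ab a0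
      by (auto simp: insert_commute)
    moreover have "b + 1 < n" using \<open>b \<noteq> n - 1\<close> ab by auto
    ultimately show False using dnth[of 0 "b-1"] dnth[of 0 "b+1"] ab nt a0 by auto
  qed
  have toidx: "\<exists>a<n. x = ps!a" if "x \<in> C" for x using that setC n_def by (auto simp: in_set_conv_nth)
  show ?thesis
  proof (cases "3 \<le> n \<and> {ps!0, ps!(n-1)} \<in> E")
    case True
    have "is_cycle_seq E C ps" unfolding is_cycle_seq_def
    proof (intro conjI ballI)
      show "3 \<le> length ps" using True n_def by simp
      show "distinct ps" by fact
      show "set ps = C" by fact
      fix x y assume xy: "x \<in> C" "y \<in> C"
      obtain a b where a: "a < n" "x = ps!a" and b: "b < n" "y = ps!b" using toidx xy by blast
      have dir: "\<exists>i<n. {ps!a, ps!b} = {ps ! i, ps ! (Suc i mod n)}"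
        if "a < b" "b < n" "{ps!a, ps!b} \<in> E" for a b
      proof -
        from EC[OF that] show ?thesis
        proof
          assume "b = Suc a" thus ?thesis using that by (intro exI[of _ a]) auto
        next
          assume "a = 0 \<and> b = n - 1"
          thus ?thesis using that npos by (intro exI[of _ "n-1"]) (auto simp: insert_commute)
        qed
      qed
      show "{x, y} \<in> E \<longleftrightarrow> (\<exists>i<length ps. {x, y} = {ps ! i, ps ! (Suc i mod length ps)})"
      proof
        assume e: "{x,y} \<in> E"
        have "a \<noteq> b" using e a b noloop by auto
        hence "a < b \<or> b < a" by auto
        thus "\<exists>i<length ps. {x, y} = {ps ! i, ps ! (Suc i mod length ps)}"
        proof
          assume "a < b" thus ?thesis using dir[of a b] e a b n_def by auto
        next
          assume "b < a" thus ?thesis using dir[of b a] e a b n_def by (auto simp: insert_commute)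
        qed
      next
        assume "\<exists>i<length ps. {x, y} = {ps ! i, ps ! (Suc i mod length ps)}"
        then obtain i where i: "i < n" "{x, y} = {ps ! i, ps ! (Suc i mod n)}" using n_def by auto
        show "{x,y} \<in> E"
        proof (cases "Suc i < n")
          case True thus ?thesis using i adj by simp
        next
          case False hence "Suc i = n" using i by auto
          thus ?thesis using i True by (auto simp: insert_commute)
        qed
      qed
    qed
    thus ?thesis by blast
  next
    case False
    have "is_path_seq E C ps" unfolding is_path_seq_def
    proof (intro conjI ballI)
      show "ps \<noteq> []" by fact
      show "distinct ps" by fact
      show "set ps = C" by fact
      fix x y assume xy: "x \<in> C" "y \<in> C"
      obtain a b where a: "a < n" "x = ps!a" and b: "b < n" "y = ps!b" using toidx xy by blast
      have dir: "b = Suc a" if "a < b" "b < n" "{ps!a, ps!b} \<in> E" for a b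
      proof -
        from EC[OF that] show ?thesis
        proof
          assume h: "a = 0 \<and> b = n - 1"
          hence "\<not> 3 \<le> n" using False that by auto
          thus ?thesis using h that by auto
        qed
      qed
      show "{x, y} \<in> E \<longleftrightarrow> (\<exists>i. Suc i < length ps \<and> {x, y} = {ps ! i, ps ! Suc i})"
      proof
        assume e: "{x,y} \<in> E"
        have "a \<noteq> b" using e a b noloop by auto
        hence "a < b \<or> b < a" by auto
        thus "\<exists>i. Suc i < length ps \<and> {x, y} = {ps ! i, ps ! Suc i}"
        proof
          assume "a < b" thus ?thesis using dir[of a b] e a b n_def by auto
        next
          assume "b < a" thus ?thesis using dir[of b a] e a b n_def by (auto simp: insert_commute)
        qed
      next
        assume "\<exists>i. Suc i < length ps \<and> {x, y} = {ps ! i, ps ! Suc i}"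
        thus "{x,y} \<in> E" using adj n_def by auto
      qed
    qed
    thus ?thesis by blast
  qed
qed



locale bnet =
  fixes V :: "'a set" and A :: "('a \<times> 'a) set" and rho :: 'a and X :: "'a set"
  assumes bin: "binary_network V A rho X" and tb: "tree_based V A rho X"
begin

abbreviation "Ret \<equiv> reticulations V A rho X"
abbreviation "Om \<equiv> omnians V A rho X"
abbreviation "par r \<equiv> {u. (u, r) \<in> A}"
abbreviation "ch v \<equiv> {w. (v, w) \<in> A}"

lemma phylo: "phylo_network V A rho X" using bin unfolding binary_network_def by auto

lemma finV: "finite V" and AV: "A \<subseteq> V \<times> V" and acyc: "acyclic A" and rhoV: "rho \<in> V"
  and rho_in0: "indeg A rho = 0" and reach: "\<And>v. v \<in> V \<Longrightarrow> v \<noteq> rho \<Longrightarrow> (rho, v) \<in> A\<^sup>+"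
  and rho_out: "outdeg A rho \<ge> 1" and Xdef: "X = {v \<in> V. outdeg A v = 0}"
  and Xin: "\<And>x. x \<in> X \<Longrightarrow> indeg A x = 1"
  and cls: "\<And>v. v \<in> V - X - {rho} \<Longrightarrow> (indeg A v = 1 \<and> outdeg A v \<ge> 2) \<or> (indeg A v \<ge> 2 \<and> outdeg A v = 1)"
  using phylo unfolding phylo_network_def by auto

lemma finA: "finite A" using finV AV finite_subset by blast

lemma fin_par: "finite (par v)"
proof -
  have "par v \<subseteq> fst ` A" by force
  thus ?thesis using finA finite_subset by blast
qed

lemma fin_ch: "finite (ch v)"
proof -
  have "ch v \<subseteq> snd ` A" by force
  thus ?thesis using finA finite_subset by blast
qed

lemma par_rho: "par rho = {}" using rho_in0 fin_par unfolding indeg_def by auto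

lemma ret2: "\<forall>v\<in>Ret. indeg A v = 2" using bin unfolding binary_network_def by blast
lemma tv2: "\<forall>v\<in>tree_vertices V A rho X. outdeg A v = 2" using bin unfolding binary_network_def by blast

lemma Ret_props: "r \<in> Ret \<Longrightarrow> r \<in> V \<and> r \<notin> X \<and> r \<noteq> rho \<and> card (par r) = 2"
proof -
  assume r: "r \<in> Ret"
  hence "indeg A r = 2" using ret2 by blast
  moreover have "r \<in> V - X - {rho}" using r unfolding reticulations_def by blast
  ultimately show ?thesis unfolding indeg_def by blast
qed

lemma in1: "v \<in> V \<Longrightarrow> v \<noteq> rho \<Longrightarrow> v \<notin> Ret \<Longrightarrow> card (par v) = 1"
proof -
  assume v: "v \<in> V" "v \<noteq> rho" "v \<notin> Ret"
  show ?thesis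
  proof (cases "v \<in> X")
    case True thus ?thesis using Xin unfolding indeg_def by auto
  next
    case False
    hence "(indeg A v = 1 \<and> outdeg A v \<ge> 2) \<or> (indeg A v \<ge> 2 \<and> outdeg A v = 1)" using cls v by auto
    moreover have "\<not> (indeg A v \<ge> 2 \<and> outdeg A v = 1)" using v False unfolding reticulations_def by auto
    ultimately show ?thesis unfolding indeg_def by auto
  qed
qed

lemma nonleaf_child: "v \<in> V \<Longrightarrow> v \<notin> X \<Longrightarrow> \<exists>w. (v, w) \<in> A"
  using Xdef fin_ch unfolding outdeg_def by fastforce

lemma Om_sub: "o' \<in> Om \<Longrightarrow> o' \<in> V \<and> o' \<notin> X" unfolding omnians_def by auto

lemma rho_not_Om: "rho \<notin> Om"
proof -
  have wfA: "wf A" using finite_acyclic_wf[OF finA acyc] .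
  obtain w where w: "(rho, w) \<in> A" using rho_out fin_ch unfolding outdeg_def
    by (metis (no_types, lifting) Collect_empty_eq card.empty not_one_le_zero)
  have "w \<noteq> rho" using w acyc unfolding acyclic_def by auto
  moreover have "w \<in> V" using w AV by auto
  ultimately have "w \<in> V - {rho}" by auto
  then obtain v where v: "v \<in> V - {rho}" and mn: "\<And>y. (y, v) \<in> A \<Longrightarrow> y \<notin> V - {rho}"
    using wfE_min[OF wfA] by metis
  have "(rho, v) \<in> A\<^sup>+" using reach v by auto
  then obtain u where u: "(u, v) \<in> A" using tranclD2 by metis
  have pv: "par v = {rho}"
  proof
    show "par v \<subseteq> {rho}" using mn AV by auto
    have "u \<in> V" using u AV by auto
    hence "u = rho" using mn u by auto
    thus "{rho} \<subseteq> par v" using u by auto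
  qed
  hence "v \<notin> Ret" using Ret_props[of v] by force
  moreover have "(rho, v) \<in> A" using pv by auto
  ultimately show ?thesis unfolding omnians_def by auto
qed

lemma Om_out: "o' \<in> Om \<Longrightarrow> card (ch o') \<le> 2"
proof -
  assume o: "o' \<in> Om"
  hence o2: "o' \<in> V - X - {rho}" using Om_sub rho_not_Om by auto
  show ?thesis
  proof (cases "o' \<in> Ret")
    case True thus ?thesis unfolding reticulations_def outdeg_def by auto
  next
    case False
    hence "indeg A o' = 1 \<and> outdeg A o' \<ge> 2" using cls[OF o2] o2 unfolding reticulations_def by auto
    hence "o' \<in> tree_vertices V A rho X" using o2 unfolding tree_vertices_def by auto
    thus ?thesis using tv2 unfolding outdeg_def by force
  qed
qed

end


context bnet begin

definition "Fset = {f \<in> Pi\<^sub>E Ret (\<lambda>r. par r). \<forall>o'\<in>Om. \<exists>r\<in>Ret. (o', r) \<in> A \<and> f r = o'}"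
definition "Tf f = {(u, v) \<in> A. v \<in> Ret \<longrightarrow> u = f v}"
definition "fT T = restrict (\<lambda>r. THE u. (u, r) \<in> T) Ret"

lemma Tf_sub: "Tf f \<subseteq> A" unfolding Tf_def by auto

lemma Tf_par: "f \<in> Fset \<Longrightarrow> v \<in> V \<Longrightarrow> v \<noteq> rho \<Longrightarrow> {u. (u, v) \<in> Tf f} = (if v \<in> Ret then {f v} else par v)"
proof -
  assume f: "f \<in> Fset" and v: "v \<in> V" "v \<noteq> rho"
  show ?thesis
  proof (cases "v \<in> Ret")
    case True
    hence "f v \<in> par v" using f unfolding Fset_def by (auto simp: PiE_def Pi_def)
    thus ?thesis using True unfolding Tf_def by auto
  next
    case False thus ?thesis unfolding Tf_def by auto
  qed
qed

lemma Tf_indeg: "f \<in> Fset \<Longrightarrow> v \<in> V \<Longrightarrow> v \<noteq> rho \<Longrightarrow> indeg (Tf f) v = 1"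
  using Tf_par in1 unfolding indeg_def by auto

lemma support_Tf: "f \<in> Fset \<Longrightarrow> support_tree V A rho X (Tf f)"
proof -
  assume f: "f \<in> Fset"
  have sub: "Tf f \<subseteq> A" by (rule Tf_sub)
  have "{u. (u, rho) \<in> Tf f} = {}" using par_rho sub by auto
  hence i0: "indeg (Tf f) rho = 0" unfolding indeg_def by simp
  have wfT: "wf (Tf f)"
    using finite_acyclic_wf[OF finite_subset[OF sub finA] acyclic_subset[OF acyc sub]] .
  have R: "v \<in> V \<longrightarrow> v \<noteq> rho \<longrightarrow> (rho, v) \<in> (Tf f)\<^sup>+" for v
  proof (induction v rule: wf_induct_rule[OF wfT])
    case (1 v)
    show ?case
    proof (intro impI)
      assume v: "v \<in> V" "v \<noteq> rho"
      have "card {u. (u, v) \<in> Tf f} = 1" using Tf_indeg[OF f v] unfolding indeg_def .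
      then obtain u where u: "(u, v) \<in> Tf f" by (metis (no_types, lifting) One_nat_def card_1_singleton_iff insertI1 mem_Collect_eq)
      have uV: "u \<in> V" using u sub AV by auto
      show "(rho, v) \<in> (Tf f)\<^sup>+"
      proof (cases "u = rho")
        case True thus ?thesis using u by auto
      next
        case False
        hence "(rho, u) \<in> (Tf f)\<^sup>+" using 1 u uV by auto
        thus ?thesis using u by (rule trancl_into_trancl)
      qed
    qed
  qed
  have L: "{v \<in> V. outdeg (Tf f) v = 0} = X"
  proof
    show "X \<subseteq> {v \<in> V. outdeg (Tf f) v = 0}"
    proof
      fix x assume x: "x \<in> X"
      hence "x \<in> V" "outdeg A x = 0" using Xdef by auto
      hence "ch x = {}" using fin_ch unfolding outdeg_def by auto
      hence "{w. (x, w) \<in> Tf f} = {}" using sub by auto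
      thus "x \<in> {v \<in> V. outdeg (Tf f) v = 0}" using \<open>x \<in> V\<close> unfolding outdeg_def by auto
    qed
  next
    show "{v \<in> V. outdeg (Tf f) v = 0} \<subseteq> X"
    proof (rule subsetI, rule ccontr)
      fix v assume v: "v \<in> {v \<in> V. outdeg (Tf f) v = 0}" and vX: "v \<notin> X"
      have "\<exists>w. (v, w) \<in> Tf f"
      proof (cases "v \<in> Om")
        case True
        then obtain r where "r \<in> Ret" "(v, r) \<in> A" "f r = v" using f unfolding Fset_def by blast
        thus ?thesis unfolding Tf_def by auto
      next
        case False
        then obtain w where "(v, w) \<in> A" "w \<notin> Ret" using v vX unfolding omnians_def by auto
        thus ?thesis unfolding Tf_def by auto
      qed
      then obtain w where w: "(v, w) \<in> Tf f" by blast
      have "{w. (v, w) \<in> Tf f} \<subseteq> ch v" using sub by auto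
      hence "finite {w. (v, w) \<in> Tf f}" using fin_ch[of v] finite_subset by blast
      hence "outdeg (Tf f) v \<noteq> 0" using w unfolding outdeg_def by auto
      thus False using v by auto
    qed
  qed
  show ?thesis unfolding support_tree_def using sub i0 R Tf_indeg[OF f] L by auto
qed

lemma support_par1: "support_tree V A rho X T \<Longrightarrow> v \<in> V \<Longrightarrow> v \<noteq> rho \<Longrightarrow> \<exists>u. {u'. (u', v) \<in> T} = {u}"
  unfolding support_tree_def indeg_def using card_1_singleton_iff by (metis One_nat_def)

lemma fT_val: "support_tree V A rho X T \<Longrightarrow> r \<in> Ret \<Longrightarrow> (fT T r, r) \<in> T \<and> (\<forall>u. (u, r) \<in> T \<longrightarrow> u = fT T r)"
proof -
  assume T: "support_tree V A rho X T" and r: "r \<in> Ret"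
  obtain u where u: "{u'. (u', r) \<in> T} = {u}" using support_par1[OF T] Ret_props[OF r] by blast
  have "(THE u. (u, r) \<in> T) = u" using u by (intro the_equality) auto
  thus ?thesis using u r unfolding fT_def by auto
qed

lemma fT_in: "support_tree V A rho X T \<Longrightarrow> fT T \<in> Fset"
proof -
  assume T: "support_tree V A rho X T"
  have sub: "T \<subseteq> A" using T unfolding support_tree_def by auto
  have L: "{v \<in> V. outdeg T v = 0} = X" using T unfolding support_tree_def by auto
  have "fT T \<in> Pi\<^sub>E Ret (\<lambda>r. par r)"
    using fT_val[OF T] sub unfolding PiE_def Pi_def fT_def[symmetric] by (auto simp: fT_def)
  moreover have "\<exists>r\<in>Ret. (o', r) \<in> A \<and> fT T r = o'" if o: "o' \<in> Om" for o'
  proof -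
    have oV: "o' \<in> V" "o' \<notin> X" using Om_sub[OF o] by auto
    hence "outdeg T o' \<noteq> 0" using L by auto
    then obtain w where w: "(o', w) \<in> T" unfolding outdeg_def by (metis (no_types, lifting) Collect_empty_eq card.empty)
    hence wA: "(o', w) \<in> A" using sub by auto
    hence wR: "w \<in> Ret" using o unfolding omnians_def by auto
    have "fT T w = o'" using fT_val[OF T wR] w by auto
    thus ?thesis using wA wR by auto
  qed
  ultimately show ?thesis unfolding Fset_def by auto
qed

lemma card_Sup: "card (Sup V A rho X) = card Fset"
proof -
  have "bij_betw fT (Sup V A rho X) Fset"
  proof (rule bij_betw_byWitness[where f' = Tf])
    show "\<forall>T\<in>Sup V A rho X. Tf (fT T) = T"
    proof
      fix T assume "T \<in> Sup V A rho X"
      hence T: "support_tree V A rho X T" unfolding Sup_def by auto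
      have sub: "T \<subseteq> A" using T unfolding support_tree_def by auto
      show "Tf (fT T) = T"
      proof (intro set_eqI iffI)
        fix e assume "e \<in> Tf (fT T)"
        then obtain u v where e: "e = (u, v)" "(u, v) \<in> A" "v \<in> Ret \<longrightarrow> u = fT T v" unfolding Tf_def by auto
        show "e \<in> T"
        proof (cases "v \<in> Ret")
          case True thus ?thesis using e fT_val[OF T True] by auto
        next
          case False
          have v: "v \<in> V" "v \<noteq> rho" using e AV par_rho by auto
          obtain u' where u': "{x. (x, v) \<in> T} = {u'}" using support_par1[OF T v] by blast
          have "card (par v) = 1" using in1[OF v False] .
          then obtain u'' where "par v = {u''}" using card_1_singleton_iff by (metis One_nat_def)
          moreover have "(u', v) \<in> A" using u' sub by auto
          ultimately have "u' = u" using e(2) by (metis (mono_tags, lifting) mem_Collect_eq singletonD)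
          thus ?thesis using u' e by auto
        qed
      next
        fix e assume eT: "e \<in> T"
        then obtain u v where e: "e = (u, v)" by (cases e) auto
        have "(u, v) \<in> A" using eT e sub by auto
        moreover have "v \<in> Ret \<longrightarrow> u = fT T v" using fT_val[OF T] eT e by auto
        ultimately show "e \<in> Tf (fT T)" unfolding Tf_def e by auto
      qed
    qed
    show "\<forall>f\<in>Fset. fT (Tf f) = f"
    proof
      fix f assume f: "f \<in> Fset"
      have T: "support_tree V A rho X (Tf f)" using support_Tf[OF f] .
      show "fT (Tf f) = f"
      proof
        fix r show "fT (Tf f) r = f r"
        proof (cases "r \<in> Ret")
          case True
          have "(fT (Tf f) r, r) \<in> Tf f" using fT_val[OF T True] by auto
          thus ?thesis using True unfolding Tf_def by auto
        next
          case False thus ?thesis using f unfolding fT_def Fset_def PiE_def extensional_def by auto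
        qed
      qed
    qed
    show "fT ` Sup V A rho X \<subseteq> Fset" using fT_in unfolding Sup_def by auto
    show "Tf ` Fset \<subseteq> Sup V A rho X" using support_Tf unfolding Sup_def by auto
  qed
  thus ?thesis by (rule bij_betw_same_card)
qed

lemma finite_Fset: "finite Fset"
proof -
  have "finite Ret" using finV Ret_props by (metis finite_subset subsetI)
  hence "finite (Pi\<^sub>E Ret (\<lambda>r. par r))" using fin_par by (intro finite_PiE) auto
  thus ?thesis unfolding Fset_def by auto
qed

lemma Fset_ne: "Fset \<noteq> {}"
proof -
  obtain T where "T \<in> Sup V A rho X" using tb unfolding tree_based_def by auto
  thus ?thesis using fT_in unfolding Sup_def by auto
qed

end


context bnet begin

abbreviation "E \<equiv> BN_edges V A rho X"
abbreviation "W \<equiv> BN_vertices V A rho X"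
abbreviation "Adj \<equiv> {(x, y). {x, y} \<in> E}"
abbreviation "Rel \<equiv> Adj\<^sup>* \<inter> W \<times> W"
abbreviation "Comps \<equiv> BN_components V A rho X"

lemma Comps_def': "Comps = W // Rel" unfolding BN_components_def BN_adj_def by simp

lemma E_iff: "{Inl o', Inr r} \<in> E \<longleftrightarrow> (o', r) \<in> A \<and> o' \<in> Om \<and> r \<in> Ret"
proof
  assume "{Inl o', Inr r} \<in> E"
  then obtain a b where "{Inl o', Inr r} = {Inl a, Inr b}" "(a, b) \<in> A" "a \<in> Om" "b \<in> Ret"
    unfolding BN_edges_def by blast
  thus "(o', r) \<in> A \<and> o' \<in> Om \<and> r \<in> Ret" by (auto simp: doubleton_eq_iff)
qed (auto simp: BN_edges_def)

lemma E_iff': "{Inr r, Inl o'} \<in> E \<longleftrightarrow> (o', r) \<in> A \<and> o' \<in> Om \<and> r \<in> Ret"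
  using E_iff by (simp add: insert_commute)

lemma E_cases: "e \<in> E \<Longrightarrow> \<exists>o' r. e = {Inl o', Inr r} \<and> (o', r) \<in> A \<and> o' \<in> Om \<and> r \<in> Ret"
  unfolding BN_edges_def by blast

lemma E_LL: "{Inl a, Inl b} \<notin> E" using E_cases by (fastforce simp: doubleton_eq_iff)
lemma E_RR: "{Inr a, Inr b} \<notin> E" using E_cases by (fastforce simp: doubleton_eq_iff)
lemma noloop: "{x} \<notin> E" using E_cases by (metis doubleton_eq_iff insert_absorb2 sum.distinct(1))

lemma E_W: "{x, y} \<in> E \<Longrightarrow> x \<in> W \<and> y \<in> W"
  using E_cases unfolding BN_vertices_def by (fastforce simp: doubleton_eq_iff)

lemma nbr_Inl: "{y. {Inl o', y} \<in> E} = Inr ` {r. (o', r) \<in> A \<and> o' \<in> Om \<and> r \<in> Ret}"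
proof (intro set_eqI iffI)
  fix y assume "y \<in> {y. {Inl o', y} \<in> E}"
  thus "y \<in> Inr ` {r. (o', r) \<in> A \<and> o' \<in> Om \<and> r \<in> Ret}"
    using E_LL E_iff by (cases y) auto
qed (use E_iff in auto)

lemma nbr_Inr: "{y. {Inr r, y} \<in> E} = Inl ` {o'. (o', r) \<in> A \<and> o' \<in> Om \<and> r \<in> Ret}"
proof (intro set_eqI iffI)
  fix y assume "y \<in> {y. {Inr r, y} \<in> E}"
  thus "y \<in> Inl ` {o'. (o', r) \<in> A \<and> o' \<in> Om \<and> r \<in> Ret}"
    using E_RR E_iff' by (cases y) auto
qed (use E_iff' in auto)

lemma nbr_deg: "finite {y. {x, y} \<in> E} \<and> card {y. {x, y} \<in> E} \<le> 2"
proof (cases x)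
  case (Inl o')
  have s: "{r. (o', r) \<in> A \<and> o' \<in> Om \<and> r \<in> Ret} \<subseteq> ch o'" by auto
  hence f: "finite {r. (o', r) \<in> A \<and> o' \<in> Om \<and> r \<in> Ret}" using fin_ch finite_subset by blast
  have "card {r. (o', r) \<in> A \<and> o' \<in> Om \<and> r \<in> Ret} \<le> 2"
  proof (cases "o' \<in> Om")
    case True thus ?thesis using card_mono[OF fin_ch s] Om_out[OF True] by linarith
  next
    case False thus ?thesis by simp
  qed
  hence "card ((Inr :: 'a \<Rightarrow> 'a + 'a) ` {r. (o', r) \<in> A \<and> o' \<in> Om \<and> r \<in> Ret}) \<le> 2" using card_image_le[OF f, of "Inr :: 'a \<Rightarrow> 'a + 'a"] by linarith
  thus ?thesis using Inl nbr_Inl[of o'] f by simp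
next
  case (Inr r)
  have s: "{o'. (o', r) \<in> A \<and> o' \<in> Om \<and> r \<in> Ret} \<subseteq> par r" by auto
  hence f: "finite {o'. (o', r) \<in> A \<and> o' \<in> Om \<and> r \<in> Ret}" using fin_par finite_subset by blast
  have "card {o'. (o', r) \<in> A \<and> o' \<in> Om \<and> r \<in> Ret} \<le> 2"
  proof (cases "r \<in> Ret")
    case True thus ?thesis using card_mono[OF fin_par s] Ret_props[OF True] by linarith
  next
    case False thus ?thesis by simp
  qed
  hence "card ((Inl :: 'a \<Rightarrow> 'a + 'a) ` {o'. (o', r) \<in> A \<and> o' \<in> Om \<and> r \<in> Ret}) \<le> 2" using card_image_le[OF f, of "Inl :: 'a \<Rightarrow> 'a + 'a"] by linarith
  thus ?thesis using Inr nbr_Inr[of r] f by simp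
qed

lemma symAdj: "sym Adj" by (auto simp: sym_def insert_commute)

lemma star_sym: "(x, y) \<in> Adj\<^sup>* \<Longrightarrow> (y, x) \<in> Adj\<^sup>*"
  using sym_rtrancl[OF symAdj] unfolding sym_def by blast

lemma comp_cases: "C \<in> Comps \<Longrightarrow> \<exists>c\<in>W. C = {y \<in> W. (c, y) \<in> Adj\<^sup>*}"
  unfolding Comps_def' quotient_def by auto

lemma comp_sub: "C \<in> Comps \<Longrightarrow> C \<subseteq> W" using comp_cases by blast

lemma comp_closed: "C \<in> Comps \<Longrightarrow> x \<in> C \<Longrightarrow> {x, y} \<in> E \<Longrightarrow> y \<in> C"
proof -
  assume C: "C \<in> Comps" and x: "x \<in> C" and e: "{x, y} \<in> E"
  obtain c where c: "c \<in> W" "C = {y \<in> W. (c, y) \<in> Adj\<^sup>*}" using comp_cases[OF C] by blast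
  have "(c, y) \<in> Adj\<^sup>*" using x c e by (auto intro: rtrancl_into_rtrancl)
  thus ?thesis using c E_W[OF e] by auto
qed

lemma comp_conn: "C \<in> Comps \<Longrightarrow> x \<in> C \<Longrightarrow> y \<in> C \<Longrightarrow> (x, y) \<in> Adj\<^sup>*"
proof -
  assume C: "C \<in> Comps" and x: "x \<in> C" and y: "y \<in> C"
  obtain c where c: "c \<in> W" "C = {y \<in> W. (c, y) \<in> Adj\<^sup>*}" using comp_cases[OF C] by blast
  have "(x, c) \<in> Adj\<^sup>*" using x c star_sym by auto
  thus ?thesis using y c by (auto intro: rtrancl_trans)
qed

definition "cmp x = {y \<in> W. (x, y) \<in> Adj\<^sup>*}"

lemma cmp_in: "x \<in> W \<Longrightarrow> cmp x \<in> Comps \<and> x \<in> cmp x"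
  unfolding cmp_def Comps_def' quotient_def by auto

lemma cmp_uniq: "C \<in> Comps \<Longrightarrow> x \<in> C \<Longrightarrow> cmp x = C"
proof -
  assume C: "C \<in> Comps" and x: "x \<in> C"
  obtain c where c: "c \<in> W" "C = {y \<in> W. (c, y) \<in> Adj\<^sup>*}" using comp_cases[OF C] by blast
  have cx: "(c, x) \<in> Adj\<^sup>*" "(x, c) \<in> Adj\<^sup>*" using x c star_sym by auto
  show ?thesis unfolding cmp_def c(2) using cx by (auto intro: rtrancl_trans)
qed

lemma finW: "finite W"
proof -
  have "finite Om" "finite Ret" using finV Om_sub Ret_props by (metis finite_subset subsetI)+
  thus ?thesis unfolding BN_vertices_def by auto
qed

lemma finComps: "finite Comps"
  unfolding Comps_def' by (rule finite_quotient[OF finW]) auto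

lemma comp_struct': "C \<in> Comps \<Longrightarrow> \<exists>ps. is_path_seq E C ps \<or> is_cycle_seq E C ps"
proof -
  assume C: "C \<in> Comps"
  obtain c where c: "c \<in> W" "C = {y \<in> W. (c, y) \<in> Adj\<^sup>*}" using comp_cases[OF C] by blast
  have cC: "c \<in> C" using c by auto
  have finC: "finite C" using comp_sub[OF C] finW finite_subset by blast
  show ?thesis
    by (rule comp_struct[OF finC cC]) (use comp_closed[OF C] comp_conn[OF C cC] nbr_deg noloop in auto)
qed

definition "RetC C = {r. Inr r \<in> C}"
definition "OmC C = {o'. Inl o' \<in> C}"
definition "FC C = {g \<in> Pi\<^sub>E (RetC C) (\<lambda>r. par r). \<forall>o'\<in>OmC C. \<exists>r\<in>RetC C. (o', r) \<in> A \<and> g r = o'}"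

lemma RetC_sub: "C \<in> Comps \<Longrightarrow> RetC C \<subseteq> Ret"
  using comp_sub unfolding RetC_def BN_vertices_def by auto
lemma OmC_sub: "C \<in> Comps \<Longrightarrow> OmC C \<subseteq> Om"
  using comp_sub unfolding OmC_def BN_vertices_def by auto

lemma card_Fset_prod: "card Fset = (\<Prod>C\<in>Comps. card (FC C))"
proof -
  define Phi where "Phi f = (\<lambda>C\<in>Comps. restrict f (RetC C))" for f :: "'a \<Rightarrow> 'a"
  define Psi where "Psi G = (\<lambda>r\<in>Ret. G (cmp (Inr r)) r)" for G :: "('a + 'a) set \<Rightarrow> 'a \<Rightarrow> 'a"
  have RW: "r \<in> Ret \<Longrightarrow> Inr r \<in> W" for r unfolding BN_vertices_def by auto
  have OW: "o' \<in> Om \<Longrightarrow> Inl o' \<in> W" for o' unfolding BN_vertices_def by auto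
  have "bij_betw Phi Fset (Pi\<^sub>E Comps FC)"
  proof (rule bij_betw_byWitness[where f' = Psi])
    show "\<forall>f\<in>Fset. Psi (Phi f) = f"
    proof
      fix f assume f: "f \<in> Fset"
      show "Psi (Phi f) = f"
      proof
        fix r show "Psi (Phi f) r = f r"
        proof (cases "r \<in> Ret")
          case True
          have "r \<in> RetC (cmp (Inr r))" using cmp_in[OF RW[OF True]] unfolding RetC_def by auto
          thus ?thesis using True cmp_in[OF RW[OF True]] unfolding Psi_def Phi_def by auto
        next
          case False thus ?thesis using f unfolding Psi_def Fset_def PiE_def extensional_def by auto
        qed
      qed
    qed
    show "\<forall>G\<in>Pi\<^sub>E Comps FC. Phi (Psi G) = G"
    proof
      fix G assume G: "G \<in> Pi\<^sub>E Comps FC"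
      show "Phi (Psi G) = G"
      proof
        fix C show "Phi (Psi G) C = G C"
        proof (cases "C \<in> Comps")
          case True
          show ?thesis
          proof
            fix r show "Phi (Psi G) C r = G C r"
            proof (cases "r \<in> RetC C")
              case True2: True
              have "r \<in> Ret" using RetC_sub[OF True] True2 by auto
              moreover have "cmp (Inr r) = C" using cmp_uniq[OF True] True2 unfolding RetC_def by auto
              ultimately show ?thesis using True True2 unfolding Phi_def Psi_def by auto
            next
              case False
              have "G C \<in> FC C" using G True by auto
              hence "G C r = undefined" using False unfolding FC_def PiE_def extensional_def by auto
              thus ?thesis using False True unfolding Phi_def by auto
            qed
          qed
        next
          case False thus ?thesis using G unfolding Phi_def PiE_def extensional_def by auto
        qed
      qed
    qed
    show "Phi ` Fset \<subseteq> Pi\<^sub>E Comps FC"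
    proof
      fix G assume "G \<in> Phi ` Fset"
      then obtain f where f: "f \<in> Fset" and G: "G = Phi f" by auto
      have "restrict f (RetC C) \<in> FC C" if C: "C \<in> Comps" for C
      proof -
        have "restrict f (RetC C) \<in> Pi\<^sub>E (RetC C) (\<lambda>r. par r)"
          using f RetC_sub[OF C] unfolding Fset_def by (auto simp: PiE_def Pi_def)
        moreover have "\<exists>r\<in>RetC C. (o', r) \<in> A \<and> restrict f (RetC C) r = o'" if o: "o' \<in> OmC C" for o'
        proof -
          have "o' \<in> Om" using OmC_sub[OF C] o by auto
          then obtain r where r: "r \<in> Ret" "(o', r) \<in> A" "f r = o'" using f unfolding Fset_def by blast
          have "{Inl o', Inr r} \<in> E" using E_iff r \<open>o' \<in> Om\<close> by auto
          hence "r \<in> RetC C" using comp_closed[OF C] o unfolding OmC_def RetC_def by auto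
          thus ?thesis using r by auto
        qed
        ultimately show ?thesis unfolding FC_def by auto
      qed
      thus "G \<in> Pi\<^sub>E Comps FC" unfolding G Phi_def by auto
    qed
    show "Psi ` Pi\<^sub>E Comps FC \<subseteq> Fset"
    proof
      fix f assume "f \<in> Psi ` Pi\<^sub>E Comps FC"
      then obtain G where G: "G \<in> Pi\<^sub>E Comps FC" and f: "f = Psi G" by auto
      have "f \<in> Pi\<^sub>E Ret (\<lambda>r. par r)"
      proof -
        have "G (cmp (Inr r)) r \<in> par r" if r: "r \<in> Ret" for r
        proof -
          have c: "cmp (Inr r) \<in> Comps" "Inr r \<in> cmp (Inr r)" using cmp_in[OF RW[OF r]] by auto
          hence "G (cmp (Inr r)) \<in> FC (cmp (Inr r))" using G by auto
          thus ?thesis using c unfolding FC_def RetC_def by auto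
        qed
        thus ?thesis unfolding f Psi_def by auto
      qed
      moreover have "\<exists>r\<in>Ret. (o', r) \<in> A \<and> f r = o'" if o: "o' \<in> Om" for o'
      proof -
        have c: "cmp (Inl o') \<in> Comps" "Inl o' \<in> cmp (Inl o')" using cmp_in[OF OW[OF o]] by auto
        hence "G (cmp (Inl o')) \<in> FC (cmp (Inl o'))" using G by auto
        moreover have "o' \<in> OmC (cmp (Inl o'))" using c unfolding OmC_def by auto
        ultimately obtain r where r: "r \<in> RetC (cmp (Inl o'))" "(o', r) \<in> A" "G (cmp (Inl o')) r = o'"
          unfolding FC_def by blast
        have rR: "r \<in> Ret" using RetC_sub[OF c(1)] r by auto
        have "cmp (Inr r) = cmp (Inl o')" using cmp_uniq[OF c(1)] r unfolding RetC_def by auto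
        thus ?thesis using r rR unfolding f Psi_def by auto
      qed
      ultimately show "f \<in> Fset" unfolding Fset_def by auto
    qed
  qed
  hence "card Fset = card (Pi\<^sub>E Comps FC)" by (rule bij_betw_same_card)
  also have "\<dots> = (\<Prod>C\<in>Comps. card (FC C))" by (rule card_PiE[OF finComps])
  finally show ?thesis .
qed

end


context bnet begin

lemma finite_FC: "C \<in> Comps \<Longrightarrow> finite (FC C)"
proof -
  assume C: "C \<in> Comps"
  have "finite (RetC C)" using RetC_sub[OF C] finV Ret_props by (meson finite_subset subsetI)
  hence "finite (Pi\<^sub>E (RetC C) (\<lambda>r. par r))" using fin_par by (intro finite_PiE) auto
  thus ?thesis unfolding FC_def by auto
qed

lemma Cel: "C \<in> Comps \<Longrightarrow> x \<in> C \<Longrightarrow> (isl x \<longrightarrow> x = Inl (projl x) \<and> projl x \<in> Om) \<and> (\<not> isl x \<longrightarrow> x = Inr (projr x) \<and> projr x \<in> Ret)"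
  using comp_sub unfolding BN_vertices_def by fastforce

lemma gpar: "g \<in> FC C \<Longrightarrow> Inr r \<in> C \<Longrightarrow> (g r, r) \<in> A"
  unfolding FC_def RetC_def by (auto simp: PiE_def Pi_def)

lemma FC_ext: "g \<in> FC C \<Longrightarrow> Inr r \<notin> C \<Longrightarrow> g r = undefined"
  unfolding FC_def RetC_def by (auto simp: PiE_def extensional_def)

lemma card_two: "finite S \<Longrightarrow> card S = 2 \<Longrightarrow> a \<in> S \<Longrightarrow> \<exists>b. S = {a, b} \<and> a \<noteq> b"
proof -
  assume h: "finite S" "card S = 2" "a \<in> S"
  from h(2) obtain x y where xy: "S = {x, y}" "x \<noteq> y" unfolding card_2_iff by blast
  show ?thesis
  proof (cases "a = x")
    case True thus ?thesis using xy by blast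
  next
    case False hence "a = y" using xy h(3) by blast
    thus ?thesis using xy by (intro exI[of _ x]) auto
  qed
qed

lemma card_two': "finite S \<Longrightarrow> card S = 2 \<Longrightarrow> a \<in> S \<Longrightarrow> b \<in> S \<Longrightarrow> a \<noteq> b \<Longrightarrow> S = {a, b}"
proof -
  assume h: "finite S" "card S = 2" "a \<in> S" "b \<in> S" "a \<noteq> b"
  obtain c where "S = {a, c}" "a \<noteq> c" using card_two[OF h(1) h(2) h(3)] by blast
  thus ?thesis using h by auto
qed

end

locale pathc = bnet +
  fixes C ps
  assumes C: "C \<in> Comps" and P: "is_path_seq E C ps"
begin

abbreviation "n \<equiv> length ps"

lemma setps: "set ps = C" and dist: "distinct ps" and ne: "ps \<noteq> []"
  using P unfolding is_path_seq_def by auto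

lemma nth_C: "i < n \<Longrightarrow> ps!i \<in> C" using setps by auto

lemma dnth: "i < n \<Longrightarrow> j < n \<Longrightarrow> ps!i = ps!j \<longleftrightarrow> i = j"
  using dist nth_eq_iff_index_eq by blast

lemma idx: "x \<in> C \<Longrightarrow> \<exists>i<n. ps!i = x" using setps by (auto simp: in_set_conv_nth)

lemma padj: "a < n \<Longrightarrow> b < n \<Longrightarrow> {ps!a, ps!b} \<in> E \<longleftrightarrow> (b = Suc a \<or> a = Suc b)"
proof -
  assume ab: "a < n" "b < n"
  have "{ps!a, ps!b} \<in> E \<longleftrightarrow> (\<exists>i. Suc i < n \<and> {ps!a, ps!b} = {ps!i, ps!Suc i})"
    using P nth_C ab unfolding is_path_seq_def by blast
  also have "\<dots> \<longleftrightarrow> (b = Suc a \<or> a = Suc b)"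
  proof
    assume "\<exists>i. Suc i < n \<and> {ps!a, ps!b} = {ps!i, ps!Suc i}"
    then obtain i where i: "Suc i < n" "{ps!a, ps!b} = {ps!i, ps!Suc i}" by blast
    thus "b = Suc a \<or> a = Suc b" using dnth ab by (auto simp: doubleton_eq_iff)
  next
    assume "b = Suc a \<or> a = Suc b"
    thus "\<exists>i. Suc i < n \<and> {ps!a, ps!b} = {ps!i, ps!Suc i}"
    proof
      assume "b = Suc a" thus ?thesis using ab by blast
    next
      assume "a = Suc b" thus ?thesis using ab by (intro exI[of _ b]) (auto simp: insert_commute)
    qed
  qed
  finally show ?thesis .
qed

lemma alt: "Suc i < n \<Longrightarrow> isl (ps!i) \<noteq> isl (ps!Suc i)"
proof -
  assume i: "Suc i < n"
  have e: "{ps!i, ps!Suc i} \<in> E" using padj[of i "Suc i"] i by auto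
  show ?thesis
  proof
    assume "isl (ps!i) = isl (ps!Suc i)"
    thus False using e E_LL E_RR by (cases "ps!i"; cases "ps!Suc i") auto
  qed
qed

lemma parity: "i < n \<Longrightarrow> isl (ps!i) = (isl (ps!0) = even i)"
proof (induction i)
  case 0 thus ?case by simp
next
  case (Suc i) thus ?case using alt[of i] by auto
qed

lemma cover: "g \<in> FC C \<Longrightarrow> k < n \<Longrightarrow> ps!k = Inl o' \<Longrightarrow> \<exists>j r. j < n \<and> (Suc j = k \<or> j = Suc k) \<and> ps!j = Inr r \<and> g r = o'"
proof -
  assume g: "g \<in> FC C" and k: "k < n" "ps!k = Inl o'"
  have oC: "o' \<in> OmC C" using nth_C[OF k(1)] k unfolding OmC_def by auto
  then obtain r where r: "r \<in> RetC C" "(o', r) \<in> A" "g r = o'" using g unfolding FC_def by blast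
  have "o' \<in> Om" using OmC_sub[OF C] oC by auto
  hence e: "{Inl o', Inr r} \<in> E" using E_iff r RetC_sub[OF C] by auto
  obtain j where j: "j < n" "ps!j = Inr r" using idx r(1) unfolding RetC_def by blast
  have "Suc j = k \<or> j = Suc k" using padj[OF k(1) j(1)] e k j by auto
  thus ?thesis using j r by blast
qed

lemma arc: "k < n \<Longrightarrow> ps!k = Inl o' \<Longrightarrow> j < n \<Longrightarrow> (Suc j = k \<or> j = Suc k) \<Longrightarrow> ps!j = Inr r \<Longrightarrow> (o', r) \<in> A"
  using padj[of k j] E_iff by auto

lemma rev_path: "is_path_seq E C (rev ps)"
  unfolding is_path_seq_def
proof (intro conjI ballI)
  show "rev ps \<noteq> []" "distinct (rev ps)" "set (rev ps) = C" using ne dist setps by auto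
  fix x y assume xy: "x \<in> C" "y \<in> C"
  have "{x, y} \<in> E \<longleftrightarrow> (\<exists>i. Suc i < n \<and> {x, y} = {ps!i, ps!Suc i})"
    using P xy unfolding is_path_seq_def by blast
  also have "\<dots> \<longleftrightarrow> (\<exists>i. Suc i < length (rev ps) \<and> {x, y} = {rev ps!i, rev ps!Suc i})"
  proof
    assume "\<exists>i. Suc i < n \<and> {x, y} = {ps!i, ps!Suc i}"
    then obtain i where i: "Suc i < n" "{x, y} = {ps!i, ps!Suc i}" by blast
    have "rev ps ! (n - 2 - i) = ps!Suc i" "rev ps ! Suc (n - 2 - i) = ps!i"
      using i(1) by (auto simp: rev_nth Suc_diff_Suc numeral_2_eq_2)
    thus "\<exists>i. Suc i < length (rev ps) \<and> {x, y} = {rev ps!i, rev ps!Suc i}"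
      using i by (intro exI[of _ "n - 2 - i"]) (auto simp: insert_commute)
  next
    assume "\<exists>i. Suc i < length (rev ps) \<and> {x, y} = {rev ps!i, rev ps!Suc i}"
    then obtain i where i: "Suc i < n" "{x, y} = {rev ps!i, rev ps!Suc i}" by auto
    have "rev ps ! i = ps ! Suc (n - 2 - i)" "rev ps ! Suc i = ps ! (n - 2 - i)"
      using i(1) by (auto simp: rev_nth Suc_diff_Suc numeral_2_eq_2)
    thus "\<exists>i. Suc i < n \<and> {x, y} = {ps!i, ps!Suc i}"
      using i by (intro exI[of _ "n - 2 - i"]) (auto simp: insert_commute)
  qed
  finally show "{x, y} \<in> E \<longleftrightarrow> (\<exists>i. Suc i < length (rev ps) \<and> {x, y} = {rev ps ! i, rev ps ! Suc i})" .
qed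

lemma P1: "isl (ps!0) \<Longrightarrow> card (FC C) \<le> 1"
proof -
  assume h: "isl (ps!0)"
  have claim: "Suc (2*j) < n \<Longrightarrow> g (projr (ps!Suc (2*j))) = projl (ps!(2*j))" if g: "g \<in> FC C" for g j
  proof (induction j)
    case 0
    have "ps!0 = Inl (projl (ps!0))" using h by auto
    then obtain j r where jr: "j < n" "Suc j = 0 \<or> j = Suc 0" "ps!j = Inr r" "g r = projl (ps!0)"
      using cover[OF g, of 0] 0 by fastforce
    thus ?case by auto
  next
    case (Suc j)
    let ?k = "Suc (Suc (2*j))"
    have k: "?k < n" using Suc.prems by auto
    have "isl (ps!?k)" using parity[OF k] h by auto
    hence kI: "ps!?k = Inl (projl (ps!?k))" by auto
    obtain i r where ir: "i < n" "Suc i = ?k \<or> i = Suc ?k" "ps!i = Inr r" "g r = projl (ps!?k)"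
      using cover[OF g k kI] by blast
    have IH: "g (projr (ps!Suc (2*j))) = projl (ps!(2*j))" using Suc by auto
    have "i \<noteq> Suc (2*j)"
    proof
      assume "i = Suc (2*j)"
      hence "projl (ps!(2*j)) = projl (ps!?k)" using IH ir by auto
      moreover have "isl (ps!(2*j))" using parity[of "2*j"] h k by auto
      ultimately have "ps!(2*j) = ps!?k" using kI by (metis sum.collapse(1))
      thus False using dnth[of "2*j" ?k] k by auto
    qed
    hence "i = Suc ?k" using ir by auto
    thus ?case using ir by (auto simp: numeral_2_eq_2)
  qed
  have "g = g'" if g: "g \<in> FC C" and g': "g' \<in> FC C" for g g'
  proof
    fix r show "g r = g' r"
    proof (cases "Inr r \<in> C")
      case True
      obtain i where i: "i < n" "ps!i = Inr r" using idx True by blast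
      have "odd i" using parity[OF i(1)] h i by auto
      then obtain j where j: "i = Suc (2*j)" by (metis oddE Suc_eq_plus1)
      show ?thesis using claim[OF g, of j] claim[OF g', of j] i j by auto
    next
      case False thus ?thesis using FC_ext g g' by metis
    qed
  qed
  thus ?thesis using finite_FC[OF C] by (metis One_nat_def card_le_Suc0_iff_eq)
qed

end


context pathc begin

lemma card_C: "card C = n" using setps dist distinct_card by metis

lemma P2:
  assumes h0: "\<not> isl (ps!0)" and hl: "\<not> isl (ps!(n-1))"
  shows "card (FC C) = (n + 3) div 2 \<and> odd n"
proof -
  have n0: "0 < n" using ne by auto
  have "even (n - 1)" using parity[of "n-1"] h0 hl n0 by auto
  define m where "m = (n - 1) div 2"
  have nm: "n = 2*m + 1" using \<open>even (n-1)\<close> n0 unfolding m_def by auto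
  define rr where "rr j = projr (ps!(2*j))" for j
  define oo where "oo j = projl (ps!(2*j+1))" for j
  have rrI: "ps!(2*j) = Inr (rr j) \<and> rr j \<in> Ret" if "j \<le> m" for j
  proof -
    have "2*j < n" using that nm by auto
    hence "\<not> isl (ps!(2*j))" using parity[of "2*j"] h0 by auto
    thus ?thesis using Cel[OF C nth_C[OF \<open>2*j < n\<close>]] unfolding rr_def by auto
  qed
  have ooI: "ps!(2*j+1) = Inl (oo j) \<and> oo j \<in> Om" if "j < m" for j
  proof -
    have "2*j+1 < n" using that nm by auto
    hence "isl (ps!(2*j+1))" using parity[of "2*j+1"] h0 by auto
    thus ?thesis using Cel[OF C nth_C[OF \<open>2*j+1 < n\<close>]] unfolding oo_def by auto
  qed
  have arc1: "(oo j, rr j) \<in> A" if "j < m" for j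
    using arc[of "2*j+1" "oo j" "2*j" "rr j"] ooI[OF that] rrI[of j] that nm by auto
  have arc2: "(oo j, rr (Suc j)) \<in> A" if "j < m" for j
    using arc[of "2*j+1" "oo j" "2*j+2" "rr (Suc j)"] ooI[OF that] rrI[of "Suc j"] that nm by auto
  have rr_inj: "rr i = rr j \<longleftrightarrow> i = j" if "i \<le> m" "j \<le> m" for i j
  proof -
    have "2*i < n" "2*j < n" using that nm by auto
    thus ?thesis using rrI[OF that(1)] rrI[OF that(2)] dnth[of "2*i" "2*j"] by auto
  qed
  have oo_inj: "oo i = oo j \<longleftrightarrow> i = j" if "i < m" "j < m" for i j
  proof
    assume "oo i = oo j"
    hence "ps!(2*i+1) = ps!(2*j+1)" using ooI[OF that(1)] ooI[OF that(2)] by auto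
    thus "i = j" using dnth[of "2*i+1" "2*j+1"] that nm by auto
  qed auto
  have RetC_rr: "\<exists>j\<le>m. r = rr j" if rin: "r \<in> RetC C" for r
  proof -
    obtain i where i: "i < n" "ps!i = Inr r" using idx rin unfolding RetC_def by blast
    have "even i" using parity[OF i(1)] h0 i by auto
    then obtain j where "i = 2*j" by (auto elim: evenE)
    thus ?thesis using i nm rrI[of j] by (intro exI[of _ j]) auto
  qed
  have rr_RetC: "rr j \<in> RetC C" if jm: "j \<le> m" for j
  proof -
    have "2*j < n" using jm nm by auto
    thus ?thesis using rrI[OF jm] nth_C[of "2*j"] unfolding RetC_def by auto
  qed
  have OmC_oo: "\<exists>j<m. o' = oo j" if oin: "o' \<in> OmC C" for o'
  proof -
    obtain i where i: "i < n" "ps!i = Inl o'" using idx oin unfolding OmC_def by blast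
    have "odd i" using parity[OF i(1)] h0 i by auto
    then obtain j where "i = 2*j+1" by (auto elim: oddE)
    thus ?thesis using i nm ooI[of j] by (intro exI[of _ j]) auto
  qed
  have cov: "g (rr j) = oo j \<or> g (rr (Suc j)) = oo j" if g: "g \<in> FC C" and j: "j < m" for g j
  proof -
    have k: "2*j+1 < n" using j nm by auto
    obtain i r where ir: "i < n" "Suc i = 2*j+1 \<or> i = Suc (2*j+1)" "ps!i = Inr r" "g r = oo j"
      using cover[OF g k] ooI[OF j] by blast
    show ?thesis
    proof (cases "i = 2*j")
      case True thus ?thesis using ir rrI[of j] j by auto
    next
      case False hence "i = 2*(Suc j)" using ir by auto
      thus ?thesis using ir rrI[of "Suc j"] j by auto
    qed
  qed
  have pqex: "\<exists>x. j \<le> m \<longrightarrow> par (rr j) = {fst x, snd x} \<and> fst x \<noteq> snd x \<and> (j < m \<longrightarrow> snd x = oo j) \<and> (0 < j \<longrightarrow> fst x = oo (j - 1))" for j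
  proof (cases "j \<le> m")
    case False thus ?thesis by auto
  next
    case True
    have c2: "card (par (rr j)) = 2" using Ret_props rrI[OF True] by auto
    have fp: "finite (par (rr j))" by (rule fin_par)
    show ?thesis
    proof (cases "0 < j")
      case jp: True
      have a1: "oo (j-1) \<in> par (rr j)" using arc2[of "j-1"] jp True by auto
      show ?thesis
      proof (cases "j < m")
        case jm: True
        have a2: "oo j \<in> par (rr j)" using arc1[OF jm] by auto
        have "oo (j-1) \<noteq> oo j" using oo_inj[of "j-1" j] jp jm by auto
        hence "par (rr j) = {oo (j-1), oo j}" using card_two'[OF fp c2 a1 a2] by auto
        thus ?thesis using \<open>oo (j-1) \<noteq> oo j\<close> by (intro exI[of _ "(oo (j-1), oo j)"]) auto
      next
        case False
        obtain b where "par (rr j) = {oo (j-1), b}" "oo (j-1) \<noteq> b" using card_two[OF fp c2 a1] by blast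
        thus ?thesis using False jp by (intro exI[of _ "(oo (j-1), b)"]) auto
      qed
    next
      case False
      hence j0: "j = 0" by auto
      show ?thesis
      proof (cases "j < m")
        case jm: True
        have a2: "oo j \<in> par (rr j)" using arc1[OF jm] by auto
        obtain b where "par (rr j) = {oo j, b}" "oo j \<noteq> b" using card_two[OF fp c2 a2] by blast
        thus ?thesis using j0 by (intro exI[of _ "(b, oo j)"]) (auto simp: insert_commute)
      next
        case False
        from c2 obtain x y where "par (rr j) = {x, y}" "x \<noteq> y" unfolding card_2_iff by blast
        thus ?thesis using j0 False by (intro exI[of _ "(x, y)"]) auto
      qed
    qed
  qed
  obtain pq where pq: "\<And>j. j \<le> m \<Longrightarrow> par (rr j) = {fst (pq j), snd (pq j)} \<and> fst (pq j) \<noteq> snd (pq j) \<and> (j < m \<longrightarrow> snd (pq j) = oo j) \<and> (0 < j \<longrightarrow> fst (pq j) = oo (j - 1))"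
  proof -
    have pqall: "\<forall>j. \<exists>x. j \<le> m \<longrightarrow> par (rr j) = {fst x, snd x} \<and> fst x \<noteq> snd x \<and> (j < m \<longrightarrow> snd x = oo j) \<and> (0 < j \<longrightarrow> fst x = oo (j - 1))"
      by (intro allI pqex)
    obtain pq where "\<forall>j. j \<le> m \<longrightarrow> par (rr j) = {fst (pq j), snd (pq j)} \<and> fst (pq j) \<noteq> snd (pq j) \<and> (j < m \<longrightarrow> snd (pq j) = oo j) \<and> (0 < j \<longrightarrow> fst (pq j) = oo (j - 1))"
      using choice[OF pqall] by (elim exE) 
    thus ?thesis using that by blast
  qed
  define p where "p j = fst (pq j)" for j
  define q where "q j = snd (pq j)" for j
  have parpq: "par (rr j) = {p j, q j}" "p j \<noteq> q j" if "j \<le> m" for j using pq[OF that] unfolding p_def q_def by auto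
  have qo: "q j = oo j" if "j < m" for j using pq[of j] that unfolding q_def by auto
  have po: "p (Suc j) = oo j" if "j < m" for j using pq[of "Suc j"] that unfolding p_def by auto
  define ix where "ix r = (THE j. j \<le> m \<and> rr j = r)" for r
  have ixrr: "ix (rr j) = j" if "j \<le> m" for j
    unfolding ix_def using that rr_inj by (intro the_equality) auto
  define G where "G a = restrict (\<lambda>r. if ix r < a then q (ix r) else p (ix r)) (RetC C)" for a
  have Grr: "G a (rr j) = (if j < a then q j else p j)" if "j \<le> m" for a j
    unfolding G_def using rr_RetC[OF that] ixrr[OF that] by auto
  have G_in: "G a \<in> FC C" for a
  proof -
    have "G a \<in> Pi\<^sub>E (RetC C) (\<lambda>r. par r)"
    proof -
      have "G a r \<in> par r" if r: "r \<in> RetC C" for r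
      proof -
        obtain j where j: "j \<le> m" "r = rr j" using RetC_rr[OF r] by blast
        show ?thesis using Grr[OF j(1)] parpq[OF j(1)] j by auto
      qed
      thus ?thesis unfolding G_def by auto
    qed
    moreover have "\<exists>r\<in>RetC C. (o', r) \<in> A \<and> G a r = o'" if o: "o' \<in> OmC C" for o'
    proof -
      obtain j where j: "j < m" "o' = oo j" using OmC_oo[OF o] by blast
      show ?thesis
      proof (cases "j < a")
        case True
        thus ?thesis using j rr_RetC[of j] arc1[of j] Grr[of j a] qo[of j] by (intro bexI[of _ "rr j"]) auto
      next
        case False
        thus ?thesis using j rr_RetC[of "Suc j"] arc2[of j] Grr[of "Suc j" a] po[of j] by (intro bexI[of _ "rr (Suc j)"]) auto
      qed
    qed
    ultimately show ?thesis unfolding FC_def by auto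
  qed
  have FC_G: "g \<in> G ` {..m+1}" if g: "g \<in> FC C" for g
  proof -
    define b where "b j = (g (rr j) = q j)" for j
    have gv: "g (rr j) = (if b j then q j else p j)" if "j \<le> m" for j
    proof -
      have "g (rr j) \<in> par (rr j)" using gpar[OF g] rrI[OF that] rr_RetC[OF that] unfolding RetC_def by auto
      thus ?thesis using parpq[OF that] unfolding b_def by auto
    qed
    have anti: "\<not> b j \<Longrightarrow> \<not> b (Suc j)" if "j < m" for j
    proof -
      assume nb: "\<not> b j"
      have "g (rr j) = p j" using gv[of j] nb that by auto
      moreover have "p j \<noteq> oo j" using parpq[of j] qo[of j] that by auto
      ultimately have "g (rr (Suc j)) = oo j" using cov[OF g that] by auto
      hence "g (rr (Suc j)) = p (Suc j)" using po[OF that] by auto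
      thus "\<not> b (Suc j)" using parpq[of "Suc j"] that unfolding b_def by auto
    qed
    define a where "a = (LEAST k. (k \<le> m \<and> \<not> b k) \<or> k = m + 1)"
    have aP: "(a \<le> m \<and> \<not> b a) \<or> a = m + 1" unfolding a_def by (rule LeastI[of _ "m+1"]) auto
    have am: "a \<le> m + 1" unfolding a_def by (rule Least_le) auto
    have below: "b j" if "j < a" for j
    proof (rule ccontr)
      assume "\<not> b j"
      moreover have "j \<le> m" using that am by auto
      ultimately have "a \<le> j" unfolding a_def by (intro Least_le) auto
      thus False using that by auto
    qed
    have above: "\<not> b j" if "a \<le> j" "j \<le> m" for j
      using that
    proof (induction j rule: dec_induct)
      case base thus ?case using aP by auto
    next
      case (step j) thus ?case using anti by auto
    qed
    have "g = G a"
    proof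
      fix r show "g r = G a r"
      proof (cases "r \<in> RetC C")
        case True
        then obtain j where j: "j \<le> m" "r = rr j" using RetC_rr by blast
        show ?thesis using gv[OF j(1)] Grr[OF j(1)] below above j by (cases "j < a") auto
      next
        case False thus ?thesis using FC_ext[OF g] unfolding G_def RetC_def by auto
      qed
    qed
    thus ?thesis using am by auto
  qed
  have inj: "inj_on G {..m+1}"
  proof (rule inj_onI)
    fix a a' assume aa: "a \<in> {..m+1}" "a' \<in> {..m+1}" "G a = G a'"
    show "a = a'"
    proof (rule ccontr)
      assume "a \<noteq> a'"
      hence "min a a' \<le> m" using aa by auto
      moreover have "G a (rr (min a a')) \<noteq> G a' (rr (min a a'))"
        using Grr[OF calculation, of a] Grr[OF calculation, of a'] parpq[OF calculation] \<open>a \<noteq> a'\<close>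
        by (cases "a < a'") (auto simp: min_def)
      ultimately show False using aa by auto
    qed
  qed
  have "FC C = G ` {..m+1}" using FC_G G_in by auto
  hence "card (FC C) = m + 2" using card_image[OF inj] by auto
  thus ?thesis using nm by auto
qed

end


locale cycc = bnet +
  fixes C ps
  assumes C: "C \<in> Comps" and Cy: "is_cycle_seq E C ps"
begin

abbreviation "n \<equiv> length ps"
definition "nx i = Suc i mod n"
definition "pv i = (i + n - 1) mod n"

lemma n3: "3 \<le> n" and setps: "set ps = C" and dist: "distinct ps"
  using Cy unfolding is_cycle_seq_def by auto

lemma n0: "0 < n" using n3 by auto

lemma nx_lt: "nx i < n" unfolding nx_def using n0 by auto
lemma pv_lt: "pv i < n" unfolding pv_def using n0 by auto

lemma nx_pv: "i < n \<Longrightarrow> nx (pv i) = i"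
proof -
  assume i: "i < n"
  have "nx (pv i) = Suc ((i + n - 1) mod n) mod n" unfolding nx_def pv_def by simp
  also have "\<dots> = Suc (i + n - 1) mod n" by (simp add: mod_Suc_eq)
  also have "Suc (i + n - 1) = i + n" using n0 by auto
  finally show ?thesis using i by simp
qed

lemma pv_nx: "i < n \<Longrightarrow> pv (nx i) = i"
proof -
  assume i: "i < n"
  have e: "Suc i mod n + n - 1 = Suc i mod n + (n - 1)" using n0 by arith
  have "pv (nx i) = (Suc i mod n + (n - 1)) mod n" unfolding nx_def pv_def e by (rule refl)
  also have "\<dots> = (Suc i + (n - 1)) mod n" by (simp add: mod_add_left_eq)
  also have "Suc i + (n - 1) = i + n" using n0 by auto
  finally show ?thesis using i by simp
qed

lemma nx2: "nx (nx i) = (i + 2) mod n"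
  unfolding nx_def by (simp add: mod_Suc_eq)

lemma nx_ne_pv: "i < n \<Longrightarrow> nx i \<noteq> pv i"
proof
  assume i: "i < n" and e: "nx i = pv i"
  hence "nx (nx i) = i" using nx_pv[OF i] by simp
  hence "(i + 2) mod n = i" using nx2 by simp
  moreover have "(i + 2) mod n \<noteq> i"
  proof (cases "i + 2 < n")
    case True thus ?thesis by simp
  next
    case False
    hence "(i + 2) mod n = (i + 2 - n) mod n" by (simp add: le_mod_geq)
    also have "\<dots> = i + 2 - n" using i n3 by (intro mod_less) auto
    finally have "(i + 2) mod n = i + 2 - n" .
    thus ?thesis using n3 False by auto
  qed
  ultimately show False by simp
qed

lemma dnth: "i < n \<Longrightarrow> j < n \<Longrightarrow> ps!i = ps!j \<longleftrightarrow> i = j"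
  using dist nth_eq_iff_index_eq by blast

lemma nth_C: "i < n \<Longrightarrow> ps!i \<in> C" using setps by auto

lemma idx: "x \<in> C \<Longrightarrow> \<exists>i<n. ps!i = x" using setps by (auto simp: in_set_conv_nth)

lemma cadj: "a < n \<Longrightarrow> b < n \<Longrightarrow> {ps!a, ps!b} \<in> E \<longleftrightarrow> (b = nx a \<or> a = nx b)"
proof -
  assume ab: "a < n" "b < n"
  have "{ps!a, ps!b} \<in> E \<longleftrightarrow> (\<exists>i<n. {ps!a, ps!b} = {ps!i, ps!(nx i)})"
    using Cy nth_C ab unfolding is_cycle_seq_def nx_def by blast
  also have "\<dots> \<longleftrightarrow> (b = nx a \<or> a = nx b)"
  proof
    assume "\<exists>i<n. {ps!a, ps!b} = {ps!i, ps!(nx i)}"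
    then obtain i where i: "i < n" "{ps!a, ps!b} = {ps!i, ps!(nx i)}" by blast
    thus "b = nx a \<or> a = nx b" using dnth ab nx_lt by (auto simp: doubleton_eq_iff)
  next
    assume "b = nx a \<or> a = nx b"
    thus "\<exists>i<n. {ps!a, ps!b} = {ps!i, ps!(nx i)}"
    proof
      assume "b = nx a" thus ?thesis using ab by blast
    next
      assume "a = nx b" thus ?thesis using ab by (intro exI[of _ b]) (auto simp: insert_commute)
    qed
  qed
  finally show ?thesis .
qed

lemma alt: "i < n \<Longrightarrow> isl (ps!i) \<noteq> isl (ps!(nx i))"
proof -
  assume i: "i < n"
  have e: "{ps!i, ps!(nx i)} \<in> E" using cadj[OF i nx_lt] by auto
  show ?thesis
  proof
    assume "isl (ps!i) = isl (ps!(nx i))"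
    thus False using e E_LL E_RR by (cases "ps!i"; cases "ps!(nx i)") auto
  qed
qed

lemma parity: "i < n \<Longrightarrow> isl (ps!i) = (isl (ps!0) = even i)"
proof (induction i)
  case 0 thus ?case by simp
next
  case (Suc i)
  have "nx i = Suc i" using Suc.prems unfolding nx_def by simp
  thus ?case using alt[of i] Suc by auto
qed

lemma even_n: "even n"
proof -
  have "nx (n - 1) = 0" unfolding nx_def using n0 by simp
  hence "isl (ps!(n-1)) \<noteq> isl (ps!0)" using alt[of "n-1"] n0 by auto
  thus ?thesis using parity[of "n-1"] n0 by auto
qed

definition "rt i = projr (ps!i)"
definition "om i = projl (ps!i)"

lemma retI: "i < n \<Longrightarrow> \<not> isl (ps!i) \<Longrightarrow> ps!i = Inr (rt i) \<and> rt i \<in> Ret"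
  using Cel[OF C nth_C] unfolding rt_def by auto
lemma omI: "i < n \<Longrightarrow> isl (ps!i) \<Longrightarrow> ps!i = Inl (om i) \<and> om i \<in> Om"
  using Cel[OF C nth_C] unfolding om_def by auto

lemma nb_om: "i < n \<Longrightarrow> \<not> isl (ps!i) \<Longrightarrow> isl (ps!(nx i)) \<and> isl (ps!(pv i))"
proof -
  assume i: "i < n" "\<not> isl (ps!i)"
  have "isl (ps!(pv i)) \<noteq> isl (ps!(nx (pv i)))" using alt[OF pv_lt] .
  thus ?thesis using alt[OF i(1)] i nx_pv[OF i(1)] by auto
qed

lemma nb_ret: "k < n \<Longrightarrow> isl (ps!k) \<Longrightarrow> \<not> isl (ps!(nx k)) \<and> \<not> isl (ps!(pv k))"
proof -
  assume k: "k < n" "isl (ps!k)"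
  have "isl (ps!(pv k)) \<noteq> isl (ps!(nx (pv k)))" using alt[OF pv_lt] .
  thus ?thesis using alt[OF k(1)] k nx_pv[OF k(1)] by auto
qed

lemma arcs: "i < n \<Longrightarrow> \<not> isl (ps!i) \<Longrightarrow> (om (nx i), rt i) \<in> A \<and> (om (pv i), rt i) \<in> A"
proof -
  assume i: "i < n" "\<not> isl (ps!i)"
  have o: "isl (ps!(nx i))" "isl (ps!(pv i))" using nb_om[OF i] by auto
  have e1: "{ps!i, ps!(nx i)} \<in> E" using cadj[OF i(1) nx_lt] by auto
  have e2: "{ps!(pv i), ps!i} \<in> E" using cadj[OF pv_lt i(1)] nx_pv[OF i(1)] by auto
  show ?thesis using e1 e2 retI[OF i] omI[OF nx_lt o(1)] omI[OF pv_lt o(2)] E_iff E_iff' by auto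
qed

lemma parset: "i < n \<Longrightarrow> \<not> isl (ps!i) \<Longrightarrow> par (rt i) = {om (pv i), om (nx i)} \<and> om (pv i) \<noteq> om (nx i)"
proof -
  assume i: "i < n" "\<not> isl (ps!i)"
  have o: "isl (ps!(nx i))" "isl (ps!(pv i))" using nb_om[OF i] by auto
  have ne: "om (pv i) \<noteq> om (nx i)"
  proof
    assume "om (pv i) = om (nx i)"
    hence "ps!(pv i) = ps!(nx i)" using omI[OF nx_lt o(1)] omI[OF pv_lt o(2)] by metis
    thus False using dnth[OF pv_lt nx_lt] nx_ne_pv[OF i(1)] by auto
  qed
  have c2: "card (par (rt i)) = 2" using Ret_props retI[OF i] by auto
  have "par (rt i) = {om (pv i), om (nx i)}"
    using card_two'[OF fin_par c2 _ _ ne] arcs[OF i] by auto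
  thus ?thesis using ne by auto
qed

lemma cover: "g \<in> FC C \<Longrightarrow> k < n \<Longrightarrow> ps!k = Inl o' \<Longrightarrow> \<exists>j r. j < n \<and> (j = pv k \<or> j = nx k) \<and> ps!j = Inr r \<and> g r = o'"
proof -
  assume g: "g \<in> FC C" and k: "k < n" "ps!k = Inl o'"
  have oC: "o' \<in> OmC C" using nth_C[OF k(1)] k unfolding OmC_def by auto
  then obtain r where r: "r \<in> RetC C" "(o', r) \<in> A" "g r = o'" using g unfolding FC_def by blast
  have "o' \<in> Om" using OmC_sub[OF C] oC by auto
  hence e: "{Inl o', Inr r} \<in> E" using E_iff r RetC_sub[OF C] by auto
  obtain j where j: "j < n" "ps!j = Inr r" using idx r(1) unfolding RetC_def by blast
  have "j = nx k \<or> k = nx j" using cadj[OF k(1) j(1)] e k j by auto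
  hence "j = nx k \<or> j = pv k" using pv_nx[OF j(1)] by auto
  thus ?thesis using j r by blast
qed

definition "ix r = (THE i. i < n \<and> ps!i = Inr r)"

lemma ix_rt: "i < n \<Longrightarrow> \<not> isl (ps!i) \<Longrightarrow> ix (rt i) = i"
proof -
  assume i: "i < n" "\<not> isl (ps!i)"
  have e: "ps!i = Inr (rt i)" using retI[OF i] by blast
  show ?thesis unfolding ix_def
  proof (rule the_equality)
    show "i < n \<and> ps!i = Inr (rt i)" using i e by blast
    fix j assume "j < n \<and> ps!j = Inr (rt i)"
    thus "j = i" using dnth[of j i] i e by auto
  qed
qed

lemma RetC_idx: "r \<in> RetC C \<Longrightarrow> \<exists>i<n. \<not> isl (ps!i) \<and> r = rt i"
proof -
  assume r: "r \<in> RetC C"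
  obtain i where i: "i < n" "ps!i = Inr r" using idx r unfolding RetC_def by blast
  thus ?thesis unfolding rt_def by (intro exI[of _ i]) auto
qed

lemma rt_RetC: "i < n \<Longrightarrow> \<not> isl (ps!i) \<Longrightarrow> rt i \<in> RetC C"
proof -
  assume i: "i < n" "\<not> isl (ps!i)"
  have "ps!i \<in> C" using nth_C[OF i(1)] .
  thus ?thesis using retI[OF i] unfolding RetC_def by auto
qed

definition "gR = restrict (\<lambda>r. om (nx (ix r))) (RetC C)"
definition "gL = restrict (\<lambda>r. om (pv (ix r))) (RetC C)"

lemma gR_in: "gR \<in> FC C"
proof -
  have "gR \<in> Pi\<^sub>E (RetC C) (\<lambda>r. par r)"
  proof -
    have "gR r \<in> par r" if r: "r \<in> RetC C" for r
    proof -
      obtain i where i: "i < n" "\<not> isl (ps!i)" "r = rt i" using RetC_idx[OF r] by blast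
      show ?thesis using parset[OF i(1,2)] i r ix_rt[OF i(1,2)] unfolding gR_def by auto
    qed
    thus ?thesis unfolding gR_def by auto
  qed
  moreover have "\<exists>r\<in>RetC C. (o', r) \<in> A \<and> gR r = o'" if o: "o' \<in> OmC C" for o'
  proof -
    obtain k where k: "k < n" "ps!k = Inl o'" using idx o unfolding OmC_def by blast
    have kl: "isl (ps!k)" using k by auto
    let ?j = "pv k"
    have j: "?j < n" "\<not> isl (ps!?j)" using pv_lt nb_ret[OF k(1) kl] by auto
    have "om (nx ?j) = o'" using nx_pv[OF k(1)] omI[OF k(1) kl] k unfolding om_def by auto
    thus ?thesis using arcs[OF j] rt_RetC[OF j] ix_rt[OF j] unfolding gR_def by (intro bexI[of _ "rt ?j"]) auto
  qed
  ultimately show ?thesis unfolding FC_def by auto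
qed

lemma gL_in: "gL \<in> FC C"
proof -
  have "gL \<in> Pi\<^sub>E (RetC C) (\<lambda>r. par r)"
  proof -
    have "gL r \<in> par r" if r: "r \<in> RetC C" for r
    proof -
      obtain i where i: "i < n" "\<not> isl (ps!i)" "r = rt i" using RetC_idx[OF r] by blast
      show ?thesis using parset[OF i(1,2)] i r ix_rt[OF i(1,2)] unfolding gL_def by auto
    qed
    thus ?thesis unfolding gL_def by auto
  qed
  moreover have "\<exists>r\<in>RetC C. (o', r) \<in> A \<and> gL r = o'" if o: "o' \<in> OmC C" for o'
  proof -
    obtain k where k: "k < n" "ps!k = Inl o'" using idx o unfolding OmC_def by blast
    have kl: "isl (ps!k)" using k by auto
    let ?j = "nx k"
    have j: "?j < n" "\<not> isl (ps!?j)" using nx_lt nb_ret[OF k(1) kl] by auto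
    have "om (pv ?j) = o'" using pv_nx[OF k(1)] omI[OF k(1) kl] k unfolding om_def by auto
    thus ?thesis using arcs[OF j] rt_RetC[OF j] ix_rt[OF j] unfolding gL_def by (intro bexI[of _ "rt ?j"]) auto
  qed
  ultimately show ?thesis unfolding FC_def by auto
qed

lemma gR_ne_gL: "gR \<noteq> gL"
proof -
  obtain i where i: "i < n" "\<not> isl (ps!i)"
  proof (cases "isl (ps!0)")
    case True
    have "nx 0 < n" "\<not> isl (ps!(nx 0))" using nb_ret[OF n0 True] nx_lt by auto
    thus ?thesis using that by blast
  next
    case False thus ?thesis using that n0 by blast
  qed
  have "gR (rt i) = om (nx i)" "gL (rt i) = om (pv i)"
    using rt_RetC[OF i] ix_rt[OF i] unfolding gR_def gL_def by auto
  thus ?thesis using parset[OF i] by auto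
qed

lemma FC_sub: "g \<in> FC C \<Longrightarrow> g = gR \<or> g = gL"
proof -
  assume g: "g \<in> FC C"
  define b where "b i = (g (rt i) = om (nx i))" for i
  have gv: "g (rt i) = (if b i then om (nx i) else om (pv i))" if i: "i < n" "\<not> isl (ps!i)" for i
  proof -
    have "Inr (rt i) \<in> C" using retI[OF i] nth_C[OF i(1)] by auto
    hence "(g (rt i), rt i) \<in> A" using gpar[OF g] by blast
    thus ?thesis using parset[OF i] unfolding b_def by auto
  qed
  have step: "\<not> b (nx (nx i))" if i: "i < n" "\<not> isl (ps!i)" "\<not> b i" for i
  proof -
    let ?k = "nx i"
    have kl: "isl (ps!?k)" using nb_om[OF i(1,2)] by auto
    obtain j r where jr: "j < n" "j = pv ?k \<or> j = nx ?k" "ps!j = Inr r" "g r = om ?k"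
      using cover[OF g nx_lt, of i "om ?k"] omI[OF nx_lt kl] by blast
    have jret: "\<not> isl (ps!j)" using jr by auto
    have rj: "r = rt j" using jr unfolding rt_def by auto
    have "j \<noteq> i"
    proof
      assume "j = i" thus False using jr rj i(3) unfolding b_def by auto
    qed
    hence jj: "j = nx ?k" using jr pv_nx[OF i(1)] by auto
    have "g (rt j) = om (pv j)" using jr rj jj pv_nx[OF nx_lt] by auto
    thus ?thesis using parset[OF jr(1) jret] jj unfolding b_def by auto
  qed
  show ?thesis
  proof (cases "\<forall>i<n. \<not> isl (ps!i) \<longrightarrow> b i")
    case True
    have "g = gR"
    proof
      fix r show "g r = gR r"
      proof (cases "r \<in> RetC C")
        case True2: True
        obtain i where i: "i < n" "\<not> isl (ps!i)" "r = rt i" using RetC_idx[OF True2] by blast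
        show ?thesis using gv[OF i(1,2)] True i True2 ix_rt[OF i(1,2)] unfolding gR_def by auto
      next
        case False thus ?thesis using FC_ext[OF g] unfolding gR_def RetC_def by auto
      qed
    qed
    thus ?thesis by auto
  next
    case False
    then obtain i0 where i0: "i0 < n" "\<not> isl (ps!i0)" "\<not> b i0" by blast
    have propg: "\<not> isl (ps!((i0 + 2*t) mod n)) \<and> \<not> b ((i0 + 2*t) mod n)" for t
    proof (induction t)
      case 0 thus ?case using i0 by simp
    next
      case (Suc t)
      let ?x = "(i0 + 2*t) mod n"
      have x: "?x < n" using n0 by simp
      have e: "nx (nx ?x) = (i0 + 2 * Suc t) mod n" unfolding nx2 by (simp add: mod_Suc_Suc_eq)
      have "isl (ps!(nx ?x))" using nb_om[OF x] Suc by auto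
      hence "\<not> isl (ps!(nx (nx ?x)))" using nb_ret[OF nx_lt] by auto
      moreover have "\<not> b (nx (nx ?x))" using step[OF x] Suc by auto
      ultimately show ?case using e by simp
    qed
    have allL: "\<not> b j" if j: "j < n" "\<not> isl (ps!j)" for j
    proof -
      have par_eq: "even j = even i0" using parity[OF j(1)] parity[OF i0(1)] j i0 by auto
      show ?thesis
      proof (cases "i0 \<le> j")
        case True
        have "even (j - i0)" using par_eq True by auto
        then obtain t where "j - i0 = 2*t" by (rule evenE)
        hence "(i0 + 2*t) mod n = j" using True j by auto
        thus ?thesis using propg[of t] by simp
      next
        case False
        have "even (j + n - i0)" using par_eq even_n False by auto
        then obtain t where t: "j + n - i0 = 2*t" by (rule evenE)
        hence "i0 + 2*t = j + n" using False i0(1) by arith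
        hence "(i0 + 2*t) mod n = j" using j by simp
        thus ?thesis using propg[of t] by simp
      qed
    qed
    have "g = gL"
    proof
      fix r show "g r = gL r"
      proof (cases "r \<in> RetC C")
        case True2: True
        obtain i where i: "i < n" "\<not> isl (ps!i)" "r = rt i" using RetC_idx[OF True2] by blast
        show ?thesis using gv[OF i(1,2)] allL[OF i(1,2)] i True2 ix_rt[OF i(1,2)] unfolding gL_def by auto
      next
        case False thus ?thesis using FC_ext[OF g] unfolding gL_def RetC_def by auto
      qed
    qed
    thus ?thesis by auto
  qed
qed

lemma P3: "card (FC C) = 2"
proof -
  have "FC C = {gR, gL}" using FC_sub gR_in gL_in by auto
  thus ?thesis using gR_ne_gL by auto
qed

lemma card_C3: "3 \<le> card C" using n3 setps dist distinct_card by metis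

end


context bnet begin

abbreviation "Cy \<equiv> BN_cycle_components V A rho X"
abbreviation "RR \<equiv> BN_RR_paths V A rho X"

lemma Cy_sub: "Cy \<subseteq> Comps" unfolding BN_cycle_components_def by auto
lemma RR_sub: "RR \<subseteq> Comps" unfolding BN_RR_paths_def by auto

lemma cy_count: "C \<in> Cy \<Longrightarrow> card (FC C) = 2 \<and> 3 \<le> card C"
proof -
  assume "C \<in> Cy"
  then obtain ps where C: "C \<in> Comps" and ps: "is_cycle_seq E C ps" unfolding BN_cycle_components_def by blast
  have cc: "cycc V A rho X C ps" unfolding cycc_def cycc_axioms_def using bnet_axioms C ps by auto
  show ?thesis using cycc.P3[OF cc] cycc.card_C3[OF cc] by simp
qed

lemma rr_count: "C \<in> RR \<Longrightarrow> real (card (FC C)) = (real (card C) + 3) / 2"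
proof -
  assume "C \<in> RR"
  then obtain ps where C: "C \<in> Comps" and ps: "is_path_seq E C ps"
    and h: "hd ps \<in> Inr ` Ret" "last ps \<in> Inr ` Ret" unfolding BN_RR_paths_def by blast
  have pc: "pathc V A rho X C ps" unfolding pathc_def pathc_axioms_def using bnet_axioms C ps by auto
  have ne: "ps \<noteq> []" using ps unfolding is_path_seq_def by auto
  have "\<not> isl (ps!0)" "\<not> isl (ps!(length ps - 1))"
    using h ne by (auto simp: hd_conv_nth last_conv_nth)
  hence c: "card (FC C) = (length ps + 3) div 2" "odd (length ps)" using pathc.P2[OF pc] by auto
  have cC: "card C = length ps" using pathc.card_C[OF pc] .
  obtain k where k: "length ps = 2*k+1" using c(2) by (auto elim: oddE)
  have "card (FC C) = k + 2" using c(1) k by auto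
  thus ?thesis using cC k by simp
qed

lemma oth_count: "C \<in> Comps \<Longrightarrow> C \<notin> Cy \<Longrightarrow> C \<notin> RR \<Longrightarrow> card (FC C) \<le> 1"
proof -
  assume C: "C \<in> Comps" and nc: "C \<notin> Cy" and nr: "C \<notin> RR"
  obtain ps where ps: "is_path_seq E C ps \<or> is_cycle_seq E C ps" using comp_struct'[OF C] by blast
  have P: "is_path_seq E C ps" using ps nc C unfolding BN_cycle_components_def by auto
  have pc: "pathc V A rho X C ps" unfolding pathc_def pathc_axioms_def using bnet_axioms C P by auto
  have ne: "ps \<noteq> []" using P unfolding is_path_seq_def by auto
  show ?thesis
  proof (cases "isl (ps!0)")
    case True thus ?thesis using pathc.P1[OF pc] by blast
  next
    case False
    show ?thesis
    proof (cases "isl (ps!(length ps - 1))")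
      case True
      have P': "is_path_seq E C (rev ps)" using pathc.rev_path[OF pc] .
      have pc': "pathc V A rho X C (rev ps)" unfolding pathc_def pathc_axioms_def using bnet_axioms C P' by auto
      have "rev ps ! 0 = ps!(length ps - 1)" using ne by (simp add: rev_nth)
      thus ?thesis using pathc.P1[OF pc'] True by auto
    next
      case False2: False
      have c0: "ps!0 \<in> C" "ps!(length ps - 1) \<in> C" using pathc.nth_C[OF pc] ne by auto
      have e1: "ps!0 = Inr (projr (ps!0))" "projr (ps!0) \<in> Ret" using Cel[OF C c0(1)] False by auto
      have e2: "ps!(length ps - 1) = Inr (projr (ps!(length ps - 1)))" "projr (ps!(length ps - 1)) \<in> Ret"
        using Cel[OF C c0(2)] False2 by auto
      have "hd ps \<in> Inr ` Ret" using e1 ne unfolding hd_conv_nth[OF ne] by (metis image_eqI)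
      moreover have "last ps \<in> Inr ` Ret" using e2 ne unfolding last_conv_nth[OF ne] by (metis image_eqI)
      ultimately have "C \<in> RR" using C P unfolding BN_RR_paths_def by blast
      thus ?thesis using nr by auto
    qed
  qed
qed

lemma main: "real (card (Sup V A rho X)) = 2 ^ card Cy * (\<Prod>P\<in>RR. (real (card P) + 3) / 2)"
proof -
  have cp: "card (Sup V A rho X) = (\<Prod>C\<in>Comps. card (FC C))" using card_Sup card_Fset_prod by simp
  have "card Fset \<noteq> 0" using finite_Fset Fset_ne by auto
  hence nz: "\<forall>C\<in>Comps. card (FC C) \<noteq> 0" using card_Fset_prod finComps by auto
  have disj: "Cy \<inter> RR = {}"
  proof (rule ccontr)
    assume "Cy \<inter> RR \<noteq> {}"
    then obtain C where c1: "C \<in> Cy" and c2: "C \<in> RR" by blast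
    have a: "real (card (FC C)) = (real (card C) + 3) / 2" using rr_count[OF c2] .
    have b: "card (FC C) = 2" "3 \<le> card C" using cy_count[OF c1] by auto
    have "real (card C) = 1" using a b by simp
    thus False using b by simp
  qed
  define Oth where "Oth = Comps - Cy - RR"
  have split: "Comps = (Cy \<union> RR) \<union> Oth" unfolding Oth_def using Cy_sub RR_sub by auto
  have fCy: "finite Cy" "finite RR" "finite Oth" using finComps Cy_sub RR_sub finite_subset unfolding Oth_def by auto
  have "real (card (Sup V A rho X)) = (\<Prod>C\<in>Comps. real (card (FC C)))" using cp by simp
  also have "\<dots> = (\<Prod>C\<in>Cy \<union> RR. real (card (FC C))) * (\<Prod>C\<in>Oth. real (card (FC C)))"
    unfolding split by (rule prod.union_disjoint) (use fCy Oth_def in auto)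
  also have "(\<Prod>C\<in>Oth. real (card (FC C))) = 1"
  proof (rule prod.neutral, rule ballI)
    fix C assume "C \<in> Oth"
    hence "C \<in> Comps" "C \<notin> Cy" "C \<notin> RR" unfolding Oth_def by auto
    hence "card (FC C) = 1" using oth_count nz by fastforce
    thus "real (card (FC C)) = 1" by simp
  qed
  also have "(\<Prod>C\<in>Cy \<union> RR. real (card (FC C))) = (\<Prod>C\<in>Cy. real (card (FC C))) * (\<Prod>C\<in>RR. real (card (FC C)))"
    by (rule prod.union_disjoint) (use fCy disj in auto)
  also have "(\<Prod>C\<in>Cy. real (card (FC C))) = (\<Prod>C\<in>Cy. 2)"
    by (rule prod.cong) (auto dest: cy_count)
  also have "\<dots> = 2 ^ card Cy" by simp
  also have "(\<Prod>C\<in>RR. real (card (FC C))) = (\<Prod>P\<in>RR. (real (card P) + 3) / 2)"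
    by (rule prod.cong) (auto dest: rr_count)
  finally show ?thesis by simp
qed

end

theorem theorem9:
  fixes V :: "'a set" and A :: "('a \<times> 'a) set" and rho :: 'a and X :: "'a set"
  assumes "binary_network V A rho X"
    and "tree_based V A rho X"
  shows "real (card (Sup V A rho X)) =
           2 ^ card (BN_cycle_components V A rho X) *
           (\<Prod>P\<in>BN_RR_paths V A rho X. (real (card P) + 3) / 2)"
proof -
  have "bnet V A rho X" using assms by (rule bnet.intro)
  thus ?thesis by (rule bnet.main)
qed


end
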